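(* Let $c_{n,m}$ be the number of C-decorated paths ending at $(n,m)$. Then \[ c_{n,m}=c_{n,m-1}+(m+1)c_{n-1,m}-(m-1)c_{n-2,m-1}\quad(n\ge m\ge1),\qquad c_{n,m}=0\quad(n<m),\qquad c_{n,0}=1\quad(n\ge0). \] Moreover, the number of compacted binary trees of size $n$ equals $c_{n,n}$.
   Context: A horizontally decorated path is a lattice path from $(0,0)$ with steps $H=(1,0)$, $V=(0,1)$ in the region $0\le y\le x$, each $H$ step decorated by a number in $\{1,\dots,k+1\}$, $k$ its $y$-coordinate. Give each $H$ step the label equal to its decoration and each $V$ step the label equal to its final $y$-coordinate plus one. To each $V$ step associate a pair $(v_1,v_2)$: $v_2$ is the label of the step immediately before $V$; for $v_1$, draw the line of slope $1$ from the endpoint of $V$ in the south-west direction until it touches the path again, and let $S''$ be the last step before $V$ whose endpoint lies on this line; $v_1$ is the label of $S''$, or $1$ if there is no such step. A C-decorated path is a horizontally decorated path such that for every occurrence of three consecutive steps $HHV$ with $H$-decorations $h_1,h_2$, $(h_1,h_2)\ne(v_1,v_2)$ for every $V$ step preceding this occurrence. (In the recurrence, for $m=1$ the last term has coefficient $0$.) Binary trees are rooted plane trees in which each node is a leaf or an internal node with ordered left/right subtrees; size = number of internal nodes; postorder visits left, right, root. A relaxed binary tree of size $n$ is obtained from a binary tree with $n$ internal nodes (spine) by keeping the left-most leaf and turning every other leaf $\ell$ into a pointer to a vertex (internal node or left-most leaf) preceding $\ell$ in postorder; it is a DAG on the internal nodes and the left-most leaf where each internal node's left/right out-edge goes to its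 child if that child is internal or the left-most leaf, otherwise to the pointer's target. For a vertex $u$, $B(u)$ is a single leaf if $u$ is the left-most leaf, else the binary tree with left/right subtrees $B(v),B(w)$, $v,w$ the left/right out-neighbours of $u$. A compacted binary tree is a relaxed binary tree with $B(u)\not\cong B(v)$ for all distinct vertices $u\neq v$. *)

theory Defs
  imports Main
begin

text \<open>A step is either a horizontal step H carrying its decoration, or a vertical step V.
  A path is a list of steps starting at (0,0).\<close>
datatype step = H nat | V

definition xcoord :: "step list \<Rightarrow> nat" where
  "xcoord xs = length (filter (\<lambda>s. s \<noteq> V) xs)"

definition ycoord :: "step list \<Rightarrow> nat" where
  "ycoord xs = length (filter (\<lambda>s. s = V) xs)"

text \<open>The endpoint of step i (0-based) is the point reached after the prefix take (Suc i) xs;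
  the starting point of step i is the point reached after take i xs.\<close>
definition hdec_path :: "step list \<Rightarrow> bool" where
  "hdec_path xs \<longleftrightarrow>
     (\<forall>i < length xs. ycoord (take (Suc i) xs) \<le> xcoord (take (Suc i) xs)) \<and>
     (\<forall>i < length xs. \<forall>d. xs ! i = H d \<longrightarrow> 1 \<le> d \<and> d \<le> ycoord (take i xs) + 1)"

definition step_label :: "step list \<Rightarrow> nat \<Rightarrow> nat" where
  "step_label xs i = (case xs ! i of H d \<Rightarrow> d | V \<Rightarrow> ycoord (take (Suc i) xs) + 1)"

definition diag :: "step list \<Rightarrow> nat \<Rightarrow> int" where
  "diag xs i = int (xcoord (take (Suc i) xs)) - int (ycoord (take (Suc i) xs))"

definition v2 :: "step list \<Rightarrow> nat \<Rightarrow> nat" where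
  "v2 xs i = step_label xs (i - 1)"

definition v1 :: "step list \<Rightarrow> nat \<Rightarrow> nat" where
  "v1 xs i = (let S = {j. j < i \<and> diag xs j = diag xs i}
              in if S = {} then 1 else step_label xs (Max S))"

definition C_decorated :: "step list \<Rightarrow> bool" where
  "C_decorated xs \<longleftrightarrow> hdec_path xs \<and>
     (\<forall>j h1 h2. j + 2 < length xs \<longrightarrow> xs ! j = H h1 \<longrightarrow> xs ! (j + 1) = H h2 \<longrightarrow>
        xs ! (j + 2) = V \<longrightarrow>
        (\<forall>i < j. xs ! i = V \<longrightarrow> (h1, h2) \<noteq> (v1 xs i, v2 xs i)))"

definition cnum :: "nat \<Rightarrow> nat \<Rightarrow> nat" where
  "cnum n m = card {xs. C_decorated xs \<and> xcoord xs = n \<and> ycoord xs = m}"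

datatype btree = Lf | Nd btree btree

text \<open>A relaxed binary tree is encoded by its spine in which the left-most leaf is
  LeftLeaf and every other leaf is a pointer Ptr k to the vertex with index k in the
  postorder enumeration (starting from 0) of all nodes (internal nodes and leaves) of the spine.\<close>
datatype rtree = LeftLeaf | Ptr nat | Node rtree rtree

fun rsize :: "rtree \<Rightarrow> nat" where
  "rsize LeftLeaf = 0"
| "rsize (Ptr k) = 0"
| "rsize (Node l r) = Suc (rsize l + rsize r)"

fun postorder :: "rtree \<Rightarrow> rtree list" where
  "postorder LeftLeaf = [LeftLeaf]"
| "postorder (Ptr k) = [Ptr k]"
| "postorder (Node l r) = postorder l @ postorder r @ [Node l r]"

fun is_ptr :: "rtree \<Rightarrow> bool" where
  "is_ptr (Ptr k) = True"
| "is_ptr _ = False"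

fun no_leftleaf :: "rtree \<Rightarrow> bool" where
  "no_leftleaf LeftLeaf = False"
| "no_leftleaf (Ptr k) = True"
| "no_leftleaf (Node l r) = (no_leftleaf l \<and> no_leftleaf r)"

fun leaves_ok :: "rtree \<Rightarrow> bool" where
  "leaves_ok LeftLeaf = True"
| "leaves_ok (Ptr k) = False"
| "leaves_ok (Node l r) = (leaves_ok l \<and> no_leftleaf r)"

definition pointers_ok :: "rtree \<Rightarrow> bool" where
  "pointers_ok t \<longleftrightarrow> (\<forall>i < length (postorder t). \<forall>k. postorder t ! i = Ptr k \<longrightarrow>
      k < i \<and> \<not> is_ptr (postorder t ! k))"

definition relaxed :: "rtree \<Rightarrow> bool" where
  "relaxed t \<longleftrightarrow> leaves_ok t \<and> pointers_ok t"

text \<open>expand t env appends to env, in postorder, the unfolded binary trees of all nodes of t;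
  for a vertex u this is B(u), for a pointer leaf it is B of its target.\<close>
fun expand :: "rtree \<Rightarrow> btree list \<Rightarrow> btree list" where
  "expand LeftLeaf env = env @ [Lf]"
| "expand (Ptr k) env = env @ [env ! k]"
| "expand (Node l r) env =
     (let e1 = expand l env; e2 = expand r e1 in e2 @ [Nd (last e1) (last e2)])"

definition Bof :: "rtree \<Rightarrow> nat \<Rightarrow> btree" where
  "Bof t i = expand t [] ! i"

definition vertices :: "rtree \<Rightarrow> nat set" where
  "vertices t = {i. i < length (postorder t) \<and> \<not> is_ptr (postorder t ! i)}"

definition compacted :: "rtree \<Rightarrow> bool" where
  "compacted t \<longleftrightarrow> relaxed t \<and> inj_on (Bof t) (vertices t)"

end

theory Submission
  imports Defs
begin



lemma xcoord_simps[simp]: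
  "xcoord [] = 0" "xcoord (xs @ ys) = xcoord xs + xcoord ys"
  "xcoord (H d # xs) = Suc (xcoord xs)" "xcoord (V # xs) = xcoord xs"
  by (auto simp: xcoord_def)

lemma ycoord_simps[simp]:
  "ycoord [] = 0" "ycoord (xs @ ys) = ycoord xs + ycoord ys"
  "ycoord (H d # xs) = ycoord xs" "ycoord (V # xs) = Suc (ycoord xs)"
  by (auto simp: ycoord_def)

lemma hdec_y_le_x: "hdec_path xs \<Longrightarrow> ycoord xs \<le> xcoord xs"
proof (cases "xs = []")
  case False
  assume "hdec_path xs"
  then have "\<forall>i<length xs. ycoord (take (Suc i) xs) \<le> xcoord (take (Suc i) xs)"
    unfolding hdec_path_def by auto
  then have "ycoord (take (Suc (length xs - 1)) xs) \<le> xcoord (take (Suc (length xs - 1)) xs)"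
    using False by (meson diff_less length_greater_0_conv zero_less_one)
  moreover have "Suc (length xs - 1) = length xs" using False by simp
  ultimately show ?thesis by (simp only: take_all_iff) simp
qed simp

definition hcond :: "step list \<Rightarrow> step \<Rightarrow> bool" where
  "hcond xs s = (case s of V \<Rightarrow> ycoord xs + 1 \<le> xcoord xs | H d \<Rightarrow> 1 \<le> d \<and> d \<le> ycoord xs + 1)"

lemma hdec_Nil[simp]: "hdec_path []"
  by (simp add: hdec_path_def)

lemma hdec_snoc: "hdec_path (xs @ [s]) \<longleftrightarrow> hdec_path xs \<and> hcond xs s"
proof
  assume h: "hdec_path (xs @ [s])"
  have p1: "\<forall>i<length xs. ycoord (take (Suc i) xs) \<le> xcoord (take (Suc i) xs)"
  proof (intro allI impI)
    fix i assume i: "i < length xs"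
    have A: "\<forall>i<length (xs @ [s]). ycoord (take (Suc i) (xs @ [s])) \<le> xcoord (take (Suc i) (xs @ [s]))"
      using h unfolding hdec_path_def by blast
    show "ycoord (take (Suc i) xs) \<le> xcoord (take (Suc i) xs)"
      using A[rule_format, of i] i by simp
  qed
  have p2: "\<forall>i<length xs. \<forall>d. xs ! i = H d \<longrightarrow> 1 \<le> d \<and> d \<le> ycoord (take i xs) + 1"
  proof (intro allI impI)
    fix i d assume i: "i < length xs" "xs ! i = H d"
    have "(xs @ [s]) ! i = H d" using i by (simp add: nth_append)
    moreover have A: "\<forall>i<length (xs @ [s]). \<forall>d. (xs @ [s]) ! i = H d \<longrightarrow> 1 \<le> d \<and> d \<le> ycoord (take i (xs @ [s])) + 1"
      using h unfolding hdec_path_def by blast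
    ultimately have "1 \<le> d \<and> d \<le> ycoord (take i (xs @ [s])) + 1"
      using i(1) by (metis length_append_singleton less_SucI)
    then show "1 \<le> d \<and> d \<le> ycoord (take i xs) + 1"
      using i by simp
  qed
  have "hdec_path xs" unfolding hdec_path_def using p1 p2 by blast
  moreover have "hcond xs s"
  proof (cases s)
    case (H d)
    have "(xs @ [s]) ! length xs = H d" using H by simp
    then have "1 \<le> d \<and> d \<le> ycoord (take (length xs) (xs @ [s])) + 1"
      using h unfolding hdec_path_def by (metis length_append_singleton lessI)
    then show ?thesis using H unfolding hcond_def by simp
  next
    case V
    have A: "\<forall>i<length (xs @ [s]). ycoord (take (Suc i) (xs @ [s])) \<le> xcoord (take (Suc i) (xs @ [s]))"
      using h unfolding hdec_path_def by blast
    show ?thesis using A[rule_format, of "length xs"] V unfolding hcond_def by simp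
  qed
  ultimately show "hdec_path xs \<and> hcond xs s" by simp
next
  assume h: "hdec_path xs \<and> hcond xs s"
  then have yx: "ycoord xs \<le> xcoord xs" using hdec_y_le_x by blast
  have q1: "\<forall>i<length (xs @ [s]). ycoord (take (Suc i) (xs @ [s])) \<le> xcoord (take (Suc i) (xs @ [s]))"
  proof (intro allI impI)
    fix i assume i: "i < length (xs @ [s])"
    show "ycoord (take (Suc i) (xs @ [s])) \<le> xcoord (take (Suc i) (xs @ [s]))"
    proof (cases "i < length xs")
      case True
      then show ?thesis using h unfolding hdec_path_def by auto
    next
      case False
      then have "i = length xs" using i by simp
      then show ?thesis using h yx unfolding hcond_def by (cases s) auto
    qed
  qed
  have q2: "\<forall>i<length (xs @ [s]). \<forall>d. (xs @ [s]) ! i = H d \<longrightarrow> 1 \<le> d \<and> d \<le> ycoord (take i (xs @ [s])) + 1"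
  proof (intro allI impI)
    fix i d assume i: "i < length (xs @ [s])" and e: "(xs @ [s]) ! i = H d"
    show "1 \<le> d \<and> d \<le> ycoord (take i (xs @ [s])) + 1"
    proof (cases "i < length xs")
      case True
      then show ?thesis using h e unfolding hdec_path_def by (auto simp: nth_append)
    next
      case False
      then have "i = length xs" using i by simp
      then show ?thesis using h e unfolding hcond_def by auto
    qed
  qed
  show "hdec_path (xs @ [s])" unfolding hdec_path_def using q1 q2 by blast
qed

lemma hdec_prefix: "hdec_path (xs @ ys) \<Longrightarrow> hdec_path xs"
  by (induction ys rule: rev_induct) (auto simp: hdec_snoc simp flip: append_assoc)

lemma step_label_append: "j < length xs \<Longrightarrow> step_label (xs @ ys) j = step_label xs j"
  by (cases "xs ! j") (auto simp add: step_label_def nth_append)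

lemma diag_append: "j < length xs \<Longrightarrow> diag (xs @ ys) j = diag xs j"
  by (simp add: diag_def)

lemma v2_append: "i < length xs \<Longrightarrow> v2 (xs @ ys) i = v2 xs i"
  by (simp add: v2_def step_label_append)

lemma v1_append: "i < length xs \<Longrightarrow> v1 (xs @ ys) i = v1 xs i"
proof -
  assume i: "i < length xs"
  have "{j. j < i \<and> diag (xs @ ys) j = diag (xs @ ys) i} = {j. j < i \<and> diag xs j = diag xs i}"
    using i by (auto simp: diag_append)
  moreover have "\<And>j. j < i \<Longrightarrow> step_label (xs @ ys) j = step_label xs j"
    using i by (simp add: step_label_append)
  moreover have "{j. j < i \<and> diag xs j = diag xs i} \<noteq> {} \<Longrightarrow> Max {j. j < i \<and> diag xs j = diag xs i} < i"
    by (subst Max_less_iff) auto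
  ultimately show ?thesis unfolding v1_def Let_def by auto
qed

definition trip :: "step list \<Rightarrow> bool" where
  "trip xs \<longleftrightarrow> (\<forall>j h1 h2. j + 2 = length xs \<longrightarrow> xs ! j = H h1 \<longrightarrow> xs ! (j + 1) = H h2 \<longrightarrow>
        (\<forall>i < j. xs ! i = V \<longrightarrow> (h1, h2) \<noteq> (v1 xs i, v2 xs i)))"

lemma C_snoc: "C_decorated (xs @ [s]) \<longleftrightarrow> C_decorated xs \<and> hcond xs s \<and> (s = V \<longrightarrow> trip xs)"
proof -
  let ?P = "\<lambda>zs. (\<forall>j h1 h2. j + 2 < length zs \<longrightarrow> zs ! j = H h1 \<longrightarrow> zs ! (j + 1) = H h2 \<longrightarrow>
        zs ! (j + 2) = V \<longrightarrow> (\<forall>i < j. zs ! i = V \<longrightarrow> (h1, h2) \<noteq> (v1 zs i, v2 zs i)))"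
  have "?P (xs @ [s]) \<longleftrightarrow> ?P xs \<and> (s = V \<longrightarrow> trip xs)"
  proof
    assume a: "?P (xs @ [s])"
    have "?P xs"
    proof (intro allI impI)
      fix j h1 h2 i
      assume "j + 2 < length xs" "xs ! j = H h1" "xs ! (j + 1) = H h2" "xs ! (j + 2) = V" "i < j" "xs ! i = V"
      then show "(h1, h2) \<noteq> (v1 xs i, v2 xs i)"
        using a[rule_format, of j h1 h2 i] by (auto simp: nth_append v1_append v2_append)
    qed
    moreover have "s = V \<longrightarrow> trip xs"
    proof (intro impI, unfold trip_def, intro allI impI)
      fix j h1 h2 i
      assume "s = V" "j + 2 = length xs" "xs ! j = H h1" "xs ! (j + 1) = H h2" "i < j" "xs ! i = V"
      then show "(h1, h2) \<noteq> (v1 xs i, v2 xs i)"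
        using a[rule_format, of j h1 h2 i] by (auto simp: nth_append v1_append v2_append)
    qed
    ultimately show "?P xs \<and> (s = V \<longrightarrow> trip xs)" by simp
  next
    assume a: "?P xs \<and> (s = V \<longrightarrow> trip xs)"
    show "?P (xs @ [s])"
    proof (intro allI impI)
      fix j h1 h2 i
      assume j: "j + 2 < length (xs @ [s])" and e: "(xs @ [s]) ! j = H h1" "(xs @ [s]) ! (j + 1) = H h2"
        "(xs @ [s]) ! (j + 2) = V" and i: "i < j" "(xs @ [s]) ! i = V"
      show "(h1, h2) \<noteq> (v1 (xs @ [s]) i, v2 (xs @ [s]) i)"
      proof (cases "j + 2 < length xs")
        case True
        then show ?thesis using a e i by (auto simp: nth_append v1_append v2_append)
      next
        case False
        then have "j + 2 = length xs" using j by simp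
        then show ?thesis using a e i unfolding trip_def by (auto simp: nth_append v1_append v2_append)
      qed
    qed
  qed
  then show ?thesis unfolding C_decorated_def by (auto simp: hdec_snoc)
qed

lemma C_Nil[simp]: "C_decorated []"
  by (simp add: C_decorated_def)

lemma C_prefix: "C_decorated (xs @ ys) \<Longrightarrow> C_decorated xs"
  by (induction ys rule: rev_induct) (auto simp: C_snoc simp flip: append_assoc)

lemma C_hdec: "C_decorated xs \<Longrightarrow> hdec_path xs"
  by (simp add: C_decorated_def)




lemma ycoord_take_mono: "n \<le> m \<Longrightarrow> ycoord (take n xs) \<le> ycoord (take m xs)"
proof -
  assume "n \<le> m"
  then obtain k where "m = n + k" using le_Suc_ex by blast
  then show ?thesis by (simp add: take_add)
qed

lemma ycoord_take_le: "ycoord (take n xs) \<le> ycoord xs"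
  by (metis append_take_drop_id le_add1 ycoord_simps(2))

lemma label_bounds:
  assumes "hdec_path xs" "j < length xs"
  shows "1 \<le> step_label xs j \<and> step_label xs j \<le> ycoord (take (Suc j) xs) + 1"
proof (cases "xs ! j")
  case (H d)
  have "1 \<le> d \<and> d \<le> ycoord (take j xs) + 1" using assms H unfolding hdec_path_def by blast
  moreover have "ycoord (take j xs) \<le> ycoord (take (Suc j) xs)" by (rule ycoord_take_mono) simp
  ultimately show ?thesis using H by (simp add: step_label_def)
next
  case V
  then show ?thesis by (simp add: step_label_def)
qed

lemma label_le_y: "hdec_path xs \<Longrightarrow> j < length xs \<Longrightarrow> step_label xs j \<le> ycoord xs + 1"
  using label_bounds ycoord_take_le by (meson add_le_mono1 le_trans)

lemma label_ge1: "hdec_path xs \<Longrightarrow> j < length xs \<Longrightarrow> 1 \<le> step_label xs j"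
  using label_bounds by blast

lemma label_V: "q < length xs \<Longrightarrow> xs ! q = V \<Longrightarrow> step_label xs q = ycoord (take q xs) + 2"
  by (simp add: step_label_def take_Suc_conv_app_nth)

lemma label_lt:
  assumes "hdec_path xs" "j < q" "q < length xs" "xs ! q = V"
  shows "step_label xs j < step_label xs q"
proof -
  have "step_label xs j \<le> ycoord (take (Suc j) xs) + 1" using label_bounds assms by auto
  moreover have "ycoord (take (Suc j) xs) \<le> ycoord (take q xs)" using assms by (intro ycoord_take_mono) simp
  ultimately show ?thesis using label_V assms by simp
qed

lemma label_V_gt1: "q < length xs \<Longrightarrow> xs ! q = V \<Longrightarrow> 1 < step_label xs q"
  using label_V by simp

lemma first_not_V: "hdec_path xs \<Longrightarrow> xs \<noteq> [] \<Longrightarrow> xs ! 0 \<noteq> V"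
proof
  assume "hdec_path xs" "xs \<noteq> []" "xs ! 0 = V"
  then have "ycoord (take (Suc 0) xs) \<le> xcoord (take (Suc 0) xs)" unfolding hdec_path_def by blast
  moreover have "take (Suc 0) xs = [V]" using \<open>xs \<noteq> []\<close> \<open>xs ! 0 = V\<close>
    by (cases xs) auto
  ultimately show False by simp
qed

lemma v1_cases: "v1 xs i = 1 \<or> (\<exists>j<i. v1 xs i = step_label xs j)"
proof -
  let ?S = "{j. j < i \<and> diag xs j = diag xs i}"
  show ?thesis
  proof (cases "?S = {}")
    case True
    then show ?thesis unfolding v1_def Let_def by simp
  next
    case False
    have "finite ?S" by simp
    then have M: "Max ?S \<in> ?S" using False by (rule Max_in)
    have "v1 xs i = step_label xs (Max ?S)" using False unfolding v1_def Let_def by (simp only: if_False)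
    then show ?thesis using M by blast
  qed
qed

lemma v1_bounds: "hdec_path xs \<Longrightarrow> i \<le> length xs \<Longrightarrow> 1 \<le> v1 xs i \<and> v1 xs i \<le> ycoord xs + 1"
  using v1_cases[of xs i] label_le_y label_ge1
  by (metis le_add2 order.strict_trans2 le_refl)

lemma v2_bounds: "hdec_path xs \<Longrightarrow> i < length xs \<Longrightarrow> 1 \<le> v2 xs i \<and> v2 xs i \<le> ycoord xs + 1"
proof -
  assume h: "hdec_path xs" "i < length xs"
  then have "i - 1 < length xs" by simp
  then show ?thesis unfolding v2_def using label_le_y[OF h(1)] label_ge1[OF h(1)] by blast
qed

lemma v1_HV:
  "v1 (ys @ [a, H h, V]) (length ys + 2) = step_label (ys @ [a, H h]) (length ys)"
proof -
  let ?xs = "ys @ [a, H h, V]"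
  let ?S = "{j. j < length ys + 2 \<and> diag ?xs j = diag ?xs (length ys + 2)}"
  have d2: "diag ?xs (length ys + 2) = int (xcoord ys + xcoord [a] + 1) - int (ycoord ys + ycoord [a] + 1)"
    unfolding diag_def by (cases a) simp_all
  have d0: "diag ?xs (length ys) = int (xcoord ys + xcoord [a]) - int (ycoord ys + ycoord [a])"
    unfolding diag_def by (cases a) (simp_all add: take_Suc_conv_app_nth nth_append)
  have d1: "diag ?xs (length ys + 1) = int (xcoord ys + xcoord [a] + 1) - int (ycoord ys + ycoord [a])"
    unfolding diag_def by (cases a) (simp_all add: take_Suc_conv_app_nth nth_append)
  have inS: "length ys \<in> ?S" using d0 d2 by simp
  have notS: "length ys + 1 \<notin> ?S" using d1 d2 by simp
  have "Max ?S = length ys"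
  proof (rule Max_eqI)
    fix j assume "j \<in> ?S"
    then show "j \<le> length ys" using notS by (cases "j = length ys + 1") auto
  qed (use inS in auto)
  then have "v1 ?xs (length ys + 2) = step_label ?xs (length ys)"
    using inS unfolding v1_def Let_def by auto
  also have "\<dots> = step_label (ys @ [a, H h]) (length ys)"
    using step_label_append[of "length ys" "ys @ [a, H h]" "[V]"] by simp
  finally show ?thesis .
qed

lemma v2_new: "xs \<noteq> [] \<Longrightarrow> v2 (xs @ [V]) (length xs) = step_label xs (length xs - 1)"
  unfolding v2_def by (simp add: step_label_append)

definition pr :: "step list \<Rightarrow> nat \<Rightarrow> nat \<times> nat" where
  "pr xs i = (v1 xs i, v2 xs i)"

lemma pr_append: "i < length xs \<Longrightarrow> pr (xs @ ys) i = pr xs i"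
  by (simp add: pr_def v1_append v2_append)

lemma new_pair:
  assumes h: "hdec_path (xs @ [V])"
  shows "(\<exists>i<length xs. xs ! i = V \<and> pr (xs @ [V]) (length xs) = pr xs i) \<longleftrightarrow> \<not> trip xs"
proof -
  have hx: "hdec_path xs" using h hdec_prefix by blast
  have "xs \<noteq> []" using h by (auto simp: hdec_snoc hcond_def)
  then obtain zs s where xs: "xs = zs @ [s]" by (metis rev_exhaust)
  show ?thesis
  proof (cases s)
    case V
    have t: "trip xs" unfolding trip_def using xs V by (auto simp: nth_append)
    have "\<not> (pr (xs @ [V]) (length xs) = pr xs i)" if i: "i < length xs" "xs ! i = V" for i
    proof -
      have "i \<noteq> 0" using first_not_V[OF hx \<open>xs \<noteq> []\<close>] i by (cases i) auto
      have "v2 xs i = step_label xs (i - 1)" by (simp add: v2_def)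
      moreover have "v2 (xs @ [V]) (length xs) = step_label xs (length xs - 1)"
        using v2_new \<open>xs \<noteq> []\<close> by blast
      moreover have "step_label xs (i - 1) < step_label xs (length xs - 1)"
        using label_lt[OF hx, of "i - 1" "length xs - 1"] \<open>i \<noteq> 0\<close> i xs V by auto
      ultimately show ?thesis by (simp add: pr_def)
    qed
    then show ?thesis using t by blast
  next
    case (H h2)
    show ?thesis
    proof (cases "zs = []")
      case True
      have t: "trip xs" unfolding trip_def using xs True by auto
      have "\<not> (i < length xs \<and> xs ! i = V)" for i using xs True H by auto
      then show ?thesis using t by blast
    next
      case False
      then obtain ys a where zs: "zs = ys @ [a]" by (metis rev_exhaust)
      have xs2: "xs = ys @ [a, H h2]" using xs zs H by simp
      have v1n: "v1 (xs @ [V]) (length xs) = step_label xs (length ys)"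
        using v1_HV[of ys a h2] xs2 by (simp add: numeral_2_eq_2)
      have v2n: "v2 (xs @ [V]) (length xs) = h2"
        using v2_new[of xs] xs2 by (simp add: step_label_def nth_append)
      show ?thesis
      proof (cases a)
        case V
        have t: "trip xs" unfolding trip_def using xs2 V by (auto simp: nth_append)
        have "\<not> (pr (xs @ [V]) (length xs) = pr xs i)" if i: "i < length xs" "xs ! i = V" for i
        proof -
          have ile: "i \<le> length ys" using i xs2 by (cases "i = length ys + 1") (auto simp: nth_append)
          have lv: "xs ! length ys = V" using xs2 V by simp
          have "v1 xs i < step_label xs (length ys)"
          proof (cases "v1 xs i = 1")
            case True
            then show ?thesis using label_V_gt1[of "length ys" xs] lv xs2 by simp
          next
            case False
            then obtain j where "j < i" "v1 xs i = step_label xs j" using v1_cases by blast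
            then show ?thesis using label_lt[OF hx, of j "length ys"] ile lv xs2 by simp
          qed
          then show ?thesis using v1n by (auto simp: pr_def)
        qed
        then show ?thesis using t by blast
      next
        case (H h1)
        have lab1: "step_label xs (length ys) = h1" using xs2 H by (simp add: step_label_def nth_append)
        have "trip xs \<longleftrightarrow> (\<forall>i<length ys. xs ! i = V \<longrightarrow> (h1, h2) \<noteq> (v1 xs i, v2 xs i))"
          unfolding trip_def using xs2 H by (auto simp: nth_append)
        moreover have "(i < length xs \<and> xs ! i = V) \<longleftrightarrow> (i < length ys \<and> xs ! i = V)" for i
          using xs2 H by (auto simp: nth_append less_Suc_eq)
        ultimately show ?thesis using v1n v2n lab1 by (auto simp: pr_def)
      qed
    qed
  qed
qed

lemma pairs_distinct:
  assumes "C_decorated P" "i < length P" "i' < length P" "P ! i = V" "P ! i' = V" "i \<noteq> i'"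
  shows "pr P i \<noteq> pr P i'"
proof -
  have main: "pr P a \<noteq> pr P b" if ab: "a < b" "b < length P" "P ! a = V" "P ! b = V" for a b
  proof -
    let ?xs = "take b P"
    have Pd: "P = (?xs @ [V]) @ drop (Suc b) P"
      using ab id_take_nth_drop[of b P] by simp
    then have C: "C_decorated (?xs @ [V])" using assms(1) C_prefix by metis
    then have "trip ?xs" by (simp add: C_snoc)
    moreover have "hdec_path (?xs @ [V])" using C C_hdec by blast
    ultimately have "\<not> (\<exists>i<length ?xs. ?xs ! i = V \<and> pr (?xs @ [V]) (length ?xs) = pr ?xs i)"
      using new_pair by blast
    moreover have "a < length ?xs" "?xs ! a = V" using ab by auto
    ultimately have "pr (?xs @ [V]) (length ?xs) \<noteq> pr ?xs a" by blast
    moreover have "pr P b = pr (?xs @ [V]) (length ?xs)"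
      using Pd pr_append[of "length ?xs" "?xs @ [V]" "drop (Suc b) P"] ab by simp
    moreover have "pr P a = pr ?xs a"
      using pr_append[of a ?xs "drop b P"] ab by simp
    ultimately show ?thesis by simp
  qed
  show ?thesis
  proof (cases "i < i'")
    case True
    then show ?thesis using main assms by blast
  next
    case False
    then have "i' < i" using assms(6) by simp
    then show ?thesis using main assms by metis
  qed
qed




definition Cset :: "nat \<Rightarrow> nat \<Rightarrow> step list set" where
  "Cset n m = {xs. C_decorated xs \<and> xcoord xs = n \<and> ycoord xs = m}"

lemma cnum_Cset: "cnum n m = card (Cset n m)"
  by (simp add: cnum_def Cset_def)

lemma length_xy: "length xs = xcoord xs + ycoord xs"
  by (induction xs) (auto simp: xcoord_def ycoord_def)

lemma hdec_dec_le: "hdec_path xs \<Longrightarrow> H d \<in> set xs \<Longrightarrow> d \<le> ycoord xs + 1"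
proof -
  assume h: "hdec_path xs" "H d \<in> set xs"
  then obtain i where i: "i < length xs" "xs ! i = H d" by (metis in_set_conv_nth)
  then have "d \<le> ycoord (take i xs) + 1" using h unfolding hdec_path_def by blast
  then show ?thesis using ycoord_take_le[of i xs] by simp
qed

lemma finite_Cset: "finite (Cset n m)"
proof -
  have "Cset n m \<subseteq> {xs. set xs \<subseteq> insert V (H ` {..m+1}) \<and> length xs = n + m}"
  proof
    fix xs assume xs: "xs \<in> Cset n m"
    then have h: "hdec_path xs" by (simp add: Cset_def C_hdec)
    have "set xs \<subseteq> insert V (H ` {..m+1})"
    proof
      fix s assume s: "s \<in> set xs"
      show "s \<in> insert V (H ` {..m+1})"
      proof (cases s)
        case (H d)
        then have "d \<le> ycoord xs + 1" using hdec_dec_le h s by blast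
        then show ?thesis using H xs by (auto simp: Cset_def)
      qed simp
    qed
    then show "xs \<in> {xs. set xs \<subseteq> insert V (H ` {..m+1}) \<and> length xs = n + m}"
      using xs length_xy[of xs] by (simp add: Cset_def)
  qed
  moreover have "finite {xs. set xs \<subseteq> insert V (H ` {..m+1}) \<and> length xs = n + m}"
    by (rule finite_lists_length_eq) simp
  ultimately show ?thesis by (rule finite_subset)
qed

lemma Cset_empty: "n < m \<Longrightarrow> Cset n m = {}"
  using hdec_y_le_x C_hdec by (fastforce simp: Cset_def)

lemma xcoord_rep: "xcoord (replicate n (H 1)) = n" and ycoord_rep: "ycoord (replicate n (H 1)) = 0"
  by (induction n) auto

lemma C_rep: "C_decorated (replicate n (H 1))"
proof (induction n)
  case (Suc n)
  have "replicate (Suc n) (H 1) = replicate n (H 1) @ [H 1]"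
    by (simp add: replicate_append_same)
  then show ?case using Suc by (simp add: C_snoc hcond_def)
qed simp

lemma Cset_0: "Cset n 0 = {replicate n (H 1)}"
proof
  show "{replicate n (H 1)} \<subseteq> Cset n 0"
    using C_rep xcoord_rep ycoord_rep by (simp add: Cset_def)
next
  show "Cset n 0 \<subseteq> {replicate n (H 1)}"
  proof
    fix xs assume xs: "xs \<in> Cset n 0"
    then have h: "hdec_path xs" and x: "xcoord xs = n" and y: "ycoord xs = 0"
      by (auto simp: Cset_def C_hdec)
    have "\<forall>s\<in>set xs. s = H 1"
    proof
      fix s assume s: "s \<in> set xs"
      show "s = H 1"
      proof (cases s)
        case (H d)
        then have "d \<le> 1" using hdec_dec_le h s y by fastforce
        moreover obtain i where i: "i < length xs" "xs ! i = H d" using s H by (metis in_set_conv_nth)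
        then have "1 \<le> d" using h unfolding hdec_path_def by blast
        ultimately show ?thesis using H by simp
      next
        case V
        then have "V \<in> set xs" using s by simp
        then have "ycoord xs > 0" unfolding ycoord_def by (simp add: filter_empty_conv length_greater_0_conv)
        then show ?thesis using y by simp
      qed
    qed
    moreover have "length xs = n" using length_xy[of xs] x y by simp
    ultimately have "xs = replicate n (H 1)" by (simp add: replicate_eqI)
    then show "xs \<in> {replicate n (H 1)}" by simp
  qed
qed

lemma two_snoc_inj: "xs @ [a, b] = ys @ [c, d] \<Longrightarrow> xs = ys \<and> a = c \<and> b = d"
proof -
  assume e: "xs @ [a, b] = ys @ [c, d]"
  then have "length xs = length ys" by (metis add_right_cancel length_append list.size(4) length_Cons)
  then show ?thesis using e by simp
qed

definition Fp :: "step list \<Rightarrow> (nat \<times> nat) set" where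
  "Fp P = pr P ` {i. i < length P \<and> P ! i = V}"

lemma card_Fp: "C_decorated P \<Longrightarrow> card (Fp P) = ycoord P"
proof -
  assume C: "C_decorated P"
  have "inj_on (pr P) {i. i < length P \<and> P ! i = V}"
    by (rule inj_onI) (use pairs_distinct[OF C] in blast)
  then have "card (Fp P) = card {i. i < length P \<and> P ! i = V}"
    unfolding Fp_def by (rule card_image)
  also have "\<dots> = ycoord P" unfolding ycoord_def by (simp add: length_filter_conv_card)
  finally show ?thesis .
qed

definition Bad :: "nat \<Rightarrow> nat \<Rightarrow> step list set" where
  "Bad n m = {q \<in> Cset n (m - 1). \<not> trip q}"

lemma trip_short: "length q < 2 \<Longrightarrow> trip q"
  by (simp add: trip_def)

lemma Bad_image:
  assumes "2 \<le> n"
  shows "Bad n m = (\<lambda>(P, h). P @ [H (fst h), H (snd h)]) ` (SIGMA P:Cset (n - 2) (m - 1). Fp P)"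
proof
  show "Bad n m \<subseteq> (\<lambda>(P, h). P @ [H (fst h), H (snd h)]) ` (SIGMA P:Cset (n - 2) (m - 1). Fp P)"
  proof
    fix q assume q: "q \<in> Bad n m"
    then have C: "C_decorated q" and x: "xcoord q = n" and y: "ycoord q = m - 1" and nt: "\<not> trip q"
      by (auto simp: Bad_def Cset_def)
    from nt obtain j h1 h2 i where j: "j + 2 = length q" "q ! j = H h1" "q ! (j + 1) = H h2"
      and i: "i < j" "q ! i = V" "(h1, h2) = (v1 q i, v2 q i)"
      unfolding trip_def by blast
    let ?P = "take j q"
    have "drop j q = [q ! j, q ! (j + 1)]"
      using j(1) by (metis Cons_nth_drop_Suc Suc_eq_plus1 add_2_eq_Suc' drop_eq_Nil le_add2 lessI
          less_add_same_cancel1 zero_less_numeral add_lessD1 order_refl)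
    then have qd: "q = ?P @ [H h1, H h2]" using j by (metis append_take_drop_id)
    have CP: "C_decorated ?P" using C qd C_prefix by metis
    have "xcoord ?P = n - 2" "ycoord ?P = m - 1" using x y qd
      by (metis add_diff_cancel_right' xcoord_simps(2,3) xcoord_simps(1) numeral_2_eq_2 add_Suc_right add_0_right,
          metis add.right_neutral ycoord_simps(1,2,3))
    then have Pin: "?P \<in> Cset (n - 2) (m - 1)" using CP by (simp add: Cset_def)
    have "pr q i = pr ?P i" using pr_append[of i ?P "[H h1, H h2]"] qd i j by simp
    moreover have "?P ! i = V" using i by simp
    moreover have "i < length ?P" using i j by simp
    ultimately have "(h1, h2) \<in> Fp ?P" using i(3) unfolding Fp_def pr_def by force
    then show "q \<in> (\<lambda>(P, h). P @ [H (fst h), H (snd h)]) ` (SIGMA P:Cset (n - 2) (m - 1). Fp P)"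
      using Pin qd by (intro image_eqI[of _ _ "(?P, (h1, h2))"]) auto
  qed
next
  show "(\<lambda>(P, h). P @ [H (fst h), H (snd h)]) ` (SIGMA P:Cset (n - 2) (m - 1). Fp P) \<subseteq> Bad n m"
  proof
    fix q assume "q \<in> (\<lambda>(P, h). P @ [H (fst h), H (snd h)]) ` (SIGMA P:Cset (n - 2) (m - 1). Fp P)"
    then obtain P h1 h2 where P: "P \<in> Cset (n - 2) (m - 1)" and hF: "(h1, h2) \<in> Fp P"
      and q: "q = P @ [H h1, H h2]" by auto
    from hF obtain i where i: "i < length P" "P ! i = V" "(h1, h2) = pr P i" unfolding Fp_def by auto
    have C: "C_decorated P" and hP: "hdec_path P" using P by (auto simp: Cset_def C_hdec)
    have b1: "1 \<le> h1 \<and> h1 \<le> ycoord P + 1" using v1_bounds[OF hP, of i] i by (simp add: pr_def)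
    have b2: "1 \<le> h2 \<and> h2 \<le> ycoord P + 1" using v2_bounds[OF hP, of i] i by (simp add: pr_def)
    have "C_decorated (P @ [H h1])" using C b1 by (simp add: C_snoc hcond_def)
    then have Cq: "C_decorated q" using q C_snoc[of "P @ [H h1]" "H h2"] b2 by (simp add: hcond_def)
    have "\<not> trip q"
    proof -
      have "pr q i = pr P i" using pr_append[of i P "[H h1, H h2]"] q i by simp
      then have "(h1, h2) = (v1 q i, v2 q i)" using i by (simp add: pr_def)
      moreover have "length P + 2 = length q" "q ! length P = H h1" "q ! (length P + 1) = H h2"
        "q ! i = V" using q i by (auto simp: nth_append)
      ultimately show ?thesis unfolding trip_def using i(1) by blast
    qed
    moreover have "xcoord q = n" "ycoord q = m - 1" using P q assms by (auto simp: Cset_def)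
    ultimately show "q \<in> Bad n m" using Cq by (simp add: Bad_def Cset_def)
  qed
qed

lemma card_Bad:
  assumes "2 \<le> n"
  shows "card (Bad n m) = (m - 1) * card (Cset (n - 2) (m - 1))"
proof -
  let ?f = "\<lambda>(P, h). P @ [H (fst h), H (snd h)]"
  have "inj_on ?f (SIGMA P:Cset (n - 2) (m - 1). Fp P)"
    by (rule inj_onI) (auto dest!: two_snoc_inj simp: prod_eq_iff)
  then have "card (Bad n m) = card (SIGMA P:Cset (n - 2) (m - 1). Fp P)"
    using Bad_image[OF assms] by (simp add: card_image)
  also have "\<dots> = (\<Sum>P\<in>Cset (n - 2) (m - 1). card (Fp P))"
    by (rule card_SigmaI) (auto simp: finite_Cset Fp_def)
  also have "\<dots> = (\<Sum>P\<in>Cset (n - 2) (m - 1). m - 1)"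
    by (rule sum.cong) (auto simp: Cset_def card_Fp)
  also have "\<dots> = (m - 1) * card (Cset (n - 2) (m - 1))" by simp
  finally show ?thesis .
qed

lemma Bad_short: "n < 2 \<Longrightarrow> 1 \<le> m \<Longrightarrow> m \<le> n \<Longrightarrow> Bad n m = {}"
proof -
  assume "n < 2" "1 \<le> m" "m \<le> n"
  then have nm: "n = 1" "m = 1" by auto
  have "trip q" if "q \<in> Cset n (m - 1)" for q
  proof -
    have "length q = 1" using that nm length_xy[of q] by (simp add: Cset_def)
    then show ?thesis by (simp add: trip_short)
  qed
  then show ?thesis by (auto simp: Bad_def)
qed

lemma Cset_decomp:
  assumes "1 \<le> m" "m \<le> n"
  shows "Cset n m = (\<lambda>q. q @ [V]) ` {q \<in> Cset n (m - 1). trip q}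
                   \<union> (\<lambda>(q, d). q @ [H d]) ` (Cset (n - 1) m \<times> {1..m+1})"
proof
  show "Cset n m \<subseteq> (\<lambda>q. q @ [V]) ` {q \<in> Cset n (m - 1). trip q}
                   \<union> (\<lambda>(q, d). q @ [H d]) ` (Cset (n - 1) m \<times> {1..m+1})"
  proof
    fix xs assume xs: "xs \<in> Cset n m"
    then have "xs \<noteq> []" using assms by (auto simp: Cset_def)
    then obtain q s where qs: "xs = q @ [s]" by (metis rev_exhaust)
    have C: "C_decorated q" "hcond q s" "s = V \<longrightarrow> trip q" using xs qs by (auto simp: Cset_def C_snoc)
    show "xs \<in> (\<lambda>q. q @ [V]) ` {q \<in> Cset n (m - 1). trip q}
                   \<union> (\<lambda>(q, d). q @ [H d]) ` (Cset (n - 1) m \<times> {1..m+1})"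
    proof (cases s)
      case V
      then have "q \<in> {q \<in> Cset n (m - 1). trip q}" using C xs qs by (auto simp: Cset_def)
      then show ?thesis using qs V by blast
    next
      case (H d)
      then have "(q, d) \<in> Cset (n - 1) m \<times> {1..m+1}" using C xs qs by (auto simp: Cset_def hcond_def)
      then show ?thesis using qs H by force
    qed
  qed
next
  show "(\<lambda>q. q @ [V]) ` {q \<in> Cset n (m - 1). trip q}
                   \<union> (\<lambda>(q, d). q @ [H d]) ` (Cset (n - 1) m \<times> {1..m+1}) \<subseteq> Cset n m"
    using assms by (auto simp: Cset_def C_snoc hcond_def)
qed

lemma recurrence:
  assumes "1 \<le> m" "m \<le> n"
  shows "int (cnum n m) = int (cnum n (m - 1)) + int (m + 1) * int (cnum (n - 1) m)
                            - int (m - 1) * int (cnum (n - 2) (m - 1))"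
proof -
  let ?A = "(\<lambda>q. q @ [V]) ` {q \<in> Cset n (m - 1). trip q}"
  let ?B = "(\<lambda>(q, d). q @ [H d]) ` (Cset (n - 1) m \<times> {1..m+1})"
  have fA: "finite ?A" using finite_Cset by simp
  have fB: "finite ?B" using finite_Cset by simp
  have disj: "?A \<inter> ?B = {}" by auto
  have cA: "card ?A = card {q \<in> Cset n (m - 1). trip q}"
    by (rule card_image) (simp add: inj_on_def)
  have cB: "card ?B = card (Cset (n - 1) m) * (m + 1)"
  proof -
    have "inj_on (\<lambda>(q, d). q @ [H d]) (Cset (n - 1) m \<times> {1..m+1})"
      by (rule inj_onI) auto
    then have "card ?B = card (Cset (n - 1) m \<times> {1..m+1})" by (rule card_image)
    then show ?thesis by (simp add: card_cartesian_product)
  qed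
  have split: "Cset n (m - 1) = {q \<in> Cset n (m - 1). trip q} \<union> Bad n m"
    "{q \<in> Cset n (m - 1). trip q} \<inter> Bad n m = {}" by (auto simp: Bad_def)
  have cS: "card (Cset n (m - 1)) = card {q \<in> Cset n (m - 1). trip q} + card (Bad n m)"
    using split finite_Cset[of n "m - 1"]
    by (metis (no_types, lifting) card_Un_disjoint finite_Un)
  have cBad: "card (Bad n m) = (m - 1) * card (Cset (n - 2) (m - 1))"
  proof (cases "2 \<le> n")
    case True
    then show ?thesis by (rule card_Bad)
  next
    case False
    then have "Bad n m = {}" "m - 1 = 0" using Bad_short assms by auto
    then show ?thesis by simp
  qed
  have "card (Cset n m) = card ?A + card ?B"
    using Cset_decomp[OF assms] fA fB disj by (simp add: card_Un_disjoint)
  then have e1: "card (Cset n m) = card {q \<in> Cset n (m - 1). trip q} + (m + 1) * card (Cset (n - 1) m)"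
    using cA cB by simp
  have e3: "int (card (Bad n m)) = int (m - 1) * int (card (Cset (n - 2) (m - 1)))"
    using cBad by simp
  show ?thesis unfolding cnum_Cset e1 cS of_nat_add of_nat_mult e3 by simp
qed

lemma part1:
  "(\<forall>n m. 1 \<le> m \<and> m \<le> n \<longrightarrow>
           int (cnum n m) = int (cnum n (m - 1)) + int (m + 1) * int (cnum (n - 1) m)
                            - int (m - 1) * int (cnum (n - 2) (m - 1)))
       \<and> (\<forall>n m. n < m \<longrightarrow> cnum n m = 0)
       \<and> (\<forall>n. cnum n 0 = 1)"
  using recurrence Cset_empty Cset_0 by (simp add: cnum_Cset)




fun Rr :: "step list \<Rightarrow> nat list" where
  "Rr [] = [0]"
| "Rr (s # rs) = (case s of H d \<Rightarrow> Rr rs @ [Suc (length rs)]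
                   | V \<Rightarrow> take (length (Rr rs) - 2) (Rr rs) @ [Suc (length rs)])"

definition R :: "step list \<Rightarrow> nat list" where
  "R xs = Rr (rev xs)"

lemma R_Nil[simp]: "R [] = [0]" by (simp add: R_def)

lemma R_snoc_H[simp]: "R (xs @ [H d]) = R xs @ [Suc (length xs)]"
  by (simp add: R_def)

lemma R_snoc_V[simp]: "R (xs @ [V]) = take (length (R xs) - 2) (R xs) @ [Suc (length xs)]"
  by (simp add: R_def)

definition Sd :: "step list \<Rightarrow> nat \<Rightarrow> nat set" where
  "Sd xs k = {j. j < length xs \<and> diag xs j = int k}"

lemma Sd_finite[simp]: "finite (Sd xs k)"
  by (simp add: Sd_def)

lemma Sd_snoc: "Sd (xs @ [s]) k =
   (if diag (xs @ [s]) (length xs) = int k then insert (length xs) (Sd xs k) else Sd xs k)"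
  unfolding Sd_def by (auto simp: diag_append less_Suc_eq)

lemma diag_last: "diag (xs @ [s]) (length xs) = int (xcoord (xs @ [s])) - int (ycoord (xs @ [s]))"
  unfolding diag_def by simp

lemma Max_ins: "finite S \<Longrightarrow> \<forall>j\<in>S. j < p \<Longrightarrow> Max (insert p S) = p"
  by (rule Max_eqI) auto

lemma Sd_lt: "j \<in> Sd xs k \<Longrightarrow> j < length xs"
  by (simp add: Sd_def)

definition Rval :: "step list \<Rightarrow> nat \<Rightarrow> nat" where
  "Rval xs k = (if Sd xs k = {} then 0 else Suc (Max (Sd xs k)))"

lemma R_prop:
  "hdec_path xs \<Longrightarrow> length (R xs) + ycoord xs = xcoord xs + 1 \<and> (\<forall>k<length (R xs). R xs ! k = Rval xs k)"
proof (induction xs rule: rev_induct)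
  case Nil
  then show ?case by (simp add: Rval_def Sd_def)
next
  case (snoc s xs)
  have h: "hdec_path xs" "hcond xs s" using snoc.prems by (auto simp: hdec_snoc)
  have IH: "length (R xs) + ycoord xs = xcoord xs + 1" "\<And>k. k < length (R xs) \<Longrightarrow> R xs ! k = Rval xs k"
    using snoc.IH h by auto
  let ?L = "length (R xs)"
  let ?p = "length xs"
  have newmax: "Rval (xs @ [s]) k = Suc ?p" if "diag (xs @ [s]) ?p = int k" for k
  proof -
    have "Sd (xs @ [s]) k = insert ?p (Sd xs k)" using that Sd_snoc by simp
    moreover have "Max (insert ?p (Sd xs k)) = ?p" by (rule Max_ins) (auto dest: Sd_lt)
    ultimately show ?thesis by (simp add: Rval_def)
  qed
  have same: "Rval (xs @ [s]) k = Rval xs k" if "diag (xs @ [s]) ?p \<noteq> int k" for k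
    using that Sd_snoc by (simp add: Rval_def)
  show ?case
  proof (cases s)
    case (H d)
    have dg: "diag (xs @ [s]) ?p = int ?L" using diag_last[of xs s] IH(1) H by simp
    have "R (xs @ [s]) ! k = Rval (xs @ [s]) k" if k: "k < length (R (xs @ [s]))" for k
    proof (cases "k < ?L")
      case True
      then show ?thesis using IH(2) same dg H by (simp add: nth_append)
    next
      case False
      then have "k = ?L" using k H by simp
      then show ?thesis using newmax dg H by (simp add: nth_append)
    qed
    then show ?thesis using IH(1) H by simp
  next
    case V
    have L2: "2 \<le> ?L" using h(2) IH(1) V by (simp add: hcond_def)
    have dg: "diag (xs @ [s]) ?p = int (?L - 2)" using diag_last[of xs s] IH(1) V L2 by simp
    have "R (xs @ [s]) ! k = Rval (xs @ [s]) k" if k: "k < length (R (xs @ [s]))" for k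
    proof (cases "k < ?L - 2")
      case True
      then show ?thesis using IH(2) same dg V by (simp add: nth_append)
    next
      case False
      then have kk: "k = ?L - 2" using k V L2 by simp
      have lt: "length (take (?L - 2) (R xs)) = ?L - 2" by simp
      have "R (xs @ [s]) ! k = Suc ?p"
        using V kk nth_append_length[of "take (?L - 2) (R xs)" "Suc ?p"] lt by simp
      then show ?thesis using newmax dg kk by simp
    qed
    then show ?thesis using IH(1) V L2 by simp
  qed
qed

lemma v1_R:
  assumes "hdec_path (xs @ [V])"
  shows "v1 (xs @ [V]) (length xs) =
    (let a = R xs ! (length (R xs) - 2) in if a = 0 then 1 else step_label xs (a - 1))"
proof -
  have h: "hdec_path xs" "ycoord xs + 1 \<le> xcoord xs" using assms by (auto simp: hdec_snoc hcond_def)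
  have P: "length (R xs) + ycoord xs = xcoord xs + 1" "\<And>k. k < length (R xs) \<Longrightarrow> R xs ! k = Rval xs k"
    using R_prop[OF h(1)] by auto
  let ?L = "length (R xs)"
  have L2: "2 \<le> ?L" using P(1) h(2) by simp
  have dg: "diag (xs @ [V]) (length xs) = int (?L - 2)" using diag_last[of xs V] P(1) L2 by simp
  have S: "{j. j < length xs \<and> diag (xs @ [V]) j = diag (xs @ [V]) (length xs)} = Sd xs (?L - 2)"
    unfolding Sd_def dg by (auto simp: diag_append)
  have a: "R xs ! (?L - 2) = Rval xs (?L - 2)" using P(2) L2 by simp
  show ?thesis
  proof (cases "Sd xs (?L - 2) = {}")
    case True
    then show ?thesis unfolding v1_def Let_def S a by (simp add: Rval_def)
  next
    case False
    have "Max (Sd xs (?L - 2)) < length xs" using False Max_in[of "Sd xs (?L - 2)"] Sd_lt by auto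
    then show ?thesis unfolding v1_def Let_def S a using False
      by (simp add: Rval_def step_label_append)
  qed
qed

fun LBr :: "step list \<Rightarrow> btree list" where
  "LBr [] = [Lf]"
| "LBr (s # rs) = (case s of H d \<Rightarrow> LBr rs
     | V \<Rightarrow> LBr rs @ [Nd (LBr rs ! (v1 (rev rs @ [V]) (length rs) - 1)) (LBr rs ! (v2 (rev rs @ [V]) (length rs) - 1))])"

definition LB :: "step list \<Rightarrow> btree list" where
  "LB xs = LBr (rev xs)"

lemma LB_Nil[simp]: "LB [] = [Lf]" by (simp add: LB_def)
lemma LB_snoc_H[simp]: "LB (xs @ [H d]) = LB xs" by (simp add: LB_def)
lemma LB_snoc_V[simp]: "LB (xs @ [V]) = LB xs @ [Nd (LB xs ! (v1 (xs @ [V]) (length xs) - 1)) (LB xs ! (v2 (xs @ [V]) (length xs) - 1))]"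
  by (simp add: LB_def)

lemma length_LB[simp]: "length (LB xs) = ycoord xs + 1"
proof (induction xs rule: rev_induct)
  case (snoc s xs)
  then show ?case by (cases s) auto
qed simp

lemma v1_new_bounds: "hdec_path xs \<Longrightarrow> 1 \<le> v1 (xs @ [V]) (length xs) \<and> v1 (xs @ [V]) (length xs) \<le> ycoord xs + 1"
proof -
  assume h: "hdec_path xs"
  show ?thesis
  proof (cases "v1 (xs @ [V]) (length xs) = 1")
    case False
    then obtain j where j: "j < length xs" "v1 (xs @ [V]) (length xs) = step_label (xs @ [V]) j"
      using v1_cases by blast
    then have "v1 (xs @ [V]) (length xs) = step_label xs j" by (simp add: step_label_append)
    then show ?thesis using label_le_y[OF h j(1)] label_ge1[OF h j(1)] by simp
  qed simp
qed

lemma v2_new_bounds: "hdec_path xs \<Longrightarrow> xs \<noteq> [] \<Longrightarrow> 1 \<le> v2 (xs @ [V]) (length xs) \<and> v2 (xs @ [V]) (length xs) \<le> ycoord xs + 1"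
  using v2_new label_le_y label_ge1 by (metis diff_less length_greater_0_conv zero_less_one)

definition Vset :: "step list \<Rightarrow> nat set" where
  "Vset xs = {i. i < length xs \<and> xs ! i = V}"

lemma set_LB:
  "hdec_path xs \<Longrightarrow> set (LB xs) = insert Lf ((\<lambda>i. Nd (LB xs ! (v1 xs i - 1)) (LB xs ! (v2 xs i - 1))) ` Vset xs)"
proof (induction xs rule: rev_induct)
  case Nil
  then show ?case by (simp add: Vset_def)
next
  case (snoc s xs)
  have h: "hdec_path xs" "hcond xs s" using snoc.prems by (auto simp: hdec_snoc)
  have IH: "set (LB xs) = insert Lf ((\<lambda>i. Nd (LB xs ! (v1 xs i - 1)) (LB xs ! (v2 xs i - 1))) ` Vset xs)"
    using snoc.IH h by simp
  show ?case
  proof (cases s)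
    case (H d)
    have Vs: "Vset (xs @ [s]) = Vset xs" using H by (auto simp: Vset_def nth_append less_Suc_eq)
    have "(\<lambda>i. Nd (LB (xs @ [s]) ! (v1 (xs @ [s]) i - 1)) (LB (xs @ [s]) ! (v2 (xs @ [s]) i - 1))) ` Vset xs
        = (\<lambda>i. Nd (LB xs ! (v1 xs i - 1)) (LB xs ! (v2 xs i - 1))) ` Vset xs"
      using H by (intro image_cong) (auto simp: Vset_def v1_append v2_append)
    then show ?thesis using IH Vs H by simp
  next
    case V
    have Vs: "Vset (xs @ [s]) = insert (length xs) (Vset xs)" using V by (auto simp: Vset_def nth_append less_Suc_eq)
    have old: "(\<lambda>i. Nd (LB (xs @ [s]) ! (v1 (xs @ [s]) i - 1)) (LB (xs @ [s]) ! (v2 (xs @ [s]) i - 1))) ` Vset xs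
        = (\<lambda>i. Nd (LB xs ! (v1 xs i - 1)) (LB xs ! (v2 xs i - 1))) ` Vset xs"
    proof (intro image_cong refl)
      fix i assume "i \<in> Vset xs"
      then have i: "i < length xs" by (simp add: Vset_def)
      have "v1 xs i \<le> ycoord xs + 1" "v2 xs i \<le> ycoord xs + 1"
        using v1_bounds[OF h(1), of i] v2_bounds[OF h(1) i] i by auto
      then have "v1 xs i - 1 < length (LB xs)" "v2 xs i - 1 < length (LB xs)" by auto
      then show "Nd (LB (xs @ [s]) ! (v1 (xs @ [s]) i - 1)) (LB (xs @ [s]) ! (v2 (xs @ [s]) i - 1))
          = Nd (LB xs ! (v1 xs i - 1)) (LB xs ! (v2 xs i - 1))"
        using i V by (simp add: v1_append v2_append nth_append)
    qed
    have "set (LB (xs @ [s])) = insert (Nd (LB xs ! (v1 (xs @ [V]) (length xs) - 1)) (LB xs ! (v2 (xs @ [V]) (length xs) - 1))) (set (LB xs))"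
      using V by simp
    moreover have "Nd (LB (xs @ [s]) ! (v1 (xs @ [s]) (length xs) - 1)) (LB (xs @ [s]) ! (v2 (xs @ [s]) (length xs) - 1))
       = Nd (LB xs ! (v1 (xs @ [V]) (length xs) - 1)) (LB xs ! (v2 (xs @ [V]) (length xs) - 1))"
    proof -
      have "xs \<noteq> []" using h(2) V by (auto simp: hcond_def)
      then have "v1 (xs @ [V]) (length xs) \<le> ycoord xs + 1" "v2 (xs @ [V]) (length xs) \<le> ycoord xs + 1"
        using v1_new_bounds[OF h(1)] v2_new_bounds[OF h(1)] by auto
      then have "v1 (xs @ [V]) (length xs) - 1 < length (LB xs)" "v2 (xs @ [V]) (length xs) - 1 < length (LB xs)" by auto
      then show ?thesis using V by (simp add: nth_append)
    qed
    ultimately show ?thesis using IH Vs old by auto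
  qed
qed

lemma distinct_LB: "hdec_path xs \<Longrightarrow> distinct (LB xs) \<longleftrightarrow> C_decorated xs"
proof (induction xs rule: rev_induct)
  case Nil
  then show ?case by simp
next
  case (snoc s xs)
  have h: "hdec_path xs" "hcond xs s" using snoc.prems by (auto simp: hdec_snoc)
  have IH: "distinct (LB xs) \<longleftrightarrow> C_decorated xs" using snoc.IH h by simp
  show ?case
  proof (cases s)
    case (H d)
    then show ?thesis using IH h by (simp add: C_snoc)
  next
    case V
    have ne: "xs \<noteq> []" using h(2) V by (auto simp: hcond_def)
    let ?a = "v1 (xs @ [V]) (length xs)"
    let ?b = "v2 (xs @ [V]) (length xs)"
    let ?new = "Nd (LB xs ! (?a - 1)) (LB xs ! (?b - 1))"
    have ab: "1 \<le> ?a" "?a \<le> ycoord xs + 1" "1 \<le> ?b" "?b \<le> ycoord xs + 1"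
      using v1_new_bounds[OF h(1)] v2_new_bounds[OF h(1) ne] by auto
    have key: "?new \<in> set (LB xs) \<longleftrightarrow> \<not> trip xs" if d: "distinct (LB xs)"
    proof -
      have "?new \<in> set (LB xs) \<longleftrightarrow> (\<exists>i\<in>Vset xs. ?a = v1 xs i \<and> ?b = v2 xs i)"
      proof -
        have "?new \<in> set (LB xs) \<longleftrightarrow> (\<exists>i\<in>Vset xs. LB xs ! (?a - 1) = LB xs ! (v1 xs i - 1) \<and> LB xs ! (?b - 1) = LB xs ! (v2 xs i - 1))"
          using set_LB[OF h(1)] by auto
        also have "\<dots> \<longleftrightarrow> (\<exists>i\<in>Vset xs. ?a = v1 xs i \<and> ?b = v2 xs i)"
        proof (intro bex_cong refl)
          fix i assume "i \<in> Vset xs"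
          then have i: "i < length xs" by (simp add: Vset_def)
          have bi: "1 \<le> v1 xs i" "v1 xs i \<le> ycoord xs + 1" "1 \<le> v2 xs i" "v2 xs i \<le> ycoord xs + 1"
            using v1_bounds[OF h(1), of i] v2_bounds[OF h(1) i] i by auto
          have "LB xs ! (?a - 1) = LB xs ! (v1 xs i - 1) \<longleftrightarrow> ?a - 1 = v1 xs i - 1"
            using d ab bi by (intro nth_eq_iff_index_eq) auto
          moreover have "LB xs ! (?b - 1) = LB xs ! (v2 xs i - 1) \<longleftrightarrow> ?b - 1 = v2 xs i - 1"
            using d ab bi by (intro nth_eq_iff_index_eq) auto
          ultimately show "(LB xs ! (?a - 1) = LB xs ! (v1 xs i - 1) \<and> LB xs ! (?b - 1) = LB xs ! (v2 xs i - 1))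
              \<longleftrightarrow> (?a = v1 xs i \<and> ?b = v2 xs i)"
            using ab bi by auto
        qed
        finally show ?thesis .
      qed
      also have "\<dots> \<longleftrightarrow> (\<exists>i<length xs. xs ! i = V \<and> pr (xs @ [V]) (length xs) = pr xs i)"
        by (auto simp: Vset_def pr_def)
      also have "\<dots> \<longleftrightarrow> \<not> trip xs"
        using new_pair snoc.prems V by simp
      finally show ?thesis .
    qed
    show ?thesis
    proof (cases "distinct (LB xs)")
      case True
      then show ?thesis using key IH h V by (simp add: C_snoc)
    next
      case False
      then show ?thesis using IH V by (simp add: C_snoc)
    qed
  qed
qed




definition po :: "rtree list \<Rightarrow> rtree list" where
  "po st = concat (map postorder st)"

lemma po_simps[simp]: "po [] = []" "po (st @ ts) = po st @ po ts" "po [t] = postorder t"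
  "po (t # ts) = postorder t @ po ts"
  by (auto simp: po_def)

definition cntv :: "rtree list \<Rightarrow> nat" where
  "cntv ps = length (filter (\<lambda>p. \<not> is_ptr p) ps)"

lemma cntv_simps[simp]: "cntv [] = 0" "cntv (ps @ qs) = cntv ps + cntv qs"
  "cntv [p] = (if is_ptr p then 0 else 1)"
  by (auto simp: cntv_def)

definition lab :: "rtree list \<Rightarrow> nat \<Rightarrow> nat" where
  "lab ps k = cntv (take (Suc k) ps)"

definition rlab :: "rtree list \<Rightarrow> nat \<Rightarrow> nat" where
  "rlab ps i = (case ps ! i of Ptr k \<Rightarrow> lab ps k | _ \<Rightarrow> lab ps i)"

definition conv :: "rtree list \<Rightarrow> nat \<Rightarrow> step" where
  "conv ps i = (case ps ! i of Ptr k \<Rightarrow> H (lab ps k) | _ \<Rightarrow> V)"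

definition toPath :: "rtree list \<Rightarrow> step list" where
  "toPath ps = map (\<lambda>i. conv (take (Suc i) ps) i) [1..<length ps]"

definition ptrs_ok :: "rtree list \<Rightarrow> bool" where
  "ptrs_ok ps \<longleftrightarrow> (\<forall>i < length ps. \<forall>k. ps ! i = Ptr k \<longrightarrow> k < i \<and> \<not> is_ptr (ps ! k))"

definition fwf :: "rtree list \<Rightarrow> bool" where
  "fwf st \<longleftrightarrow> st \<noteq> [] \<and> leaves_ok (hd st) \<and> (\<forall>t\<in>set (tl st). no_leftleaf t) \<and> ptrs_ok (po st)"

definition Bs :: "rtree list \<Rightarrow> btree list" where
  "Bs st = foldl (\<lambda>env t. expand t env) [] st"

definition rts :: "rtree list \<Rightarrow> nat list" where
  "rts st = map (\<lambda>i. length (po (take (Suc i) st)) - 1) [0..<length st]"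

definition verts :: "rtree list \<Rightarrow> nat set" where
  "verts ps = {i. i < length ps \<and> \<not> is_ptr (ps ! i)}"

lemma postorder_ne[simp]: "postorder t \<noteq> []"
  by (cases t) auto

lemma length_postorder_pos: "0 < length (postorder t)"
  by (simp add: length_greater_0_conv)

lemma expand_app: "\<exists>zs. expand t env = env @ zs \<and> length zs = length (postorder t)"
proof (induction t arbitrary: env)
  case (Node l r)
  obtain z1 where z1: "expand l env = env @ z1" "length z1 = length (postorder l)" using Node.IH(1) by blast
  obtain z2 where z2: "expand r (expand l env) = expand l env @ z2" "length z2 = length (postorder r)"
    using Node.IH(2) by blast
  show ?case using z1 z2 by (simp add: Let_def)
qed auto

lemma length_expand[simp]: "length (expand t env) = length env + length (postorder t)"
  using expand_app[of t env] by auto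

lemma expand_nth: "i < length env \<Longrightarrow> expand t env ! i = env ! i"
  using expand_app[of t env] by (auto simp: nth_append)

lemma Bs_Nil[simp]: "Bs [] = []" by (simp add: Bs_def)

lemma Bs_snoc: "Bs (st @ [t]) = expand t (Bs st)"
  by (simp add: Bs_def)

lemma length_Bs[simp]: "length (Bs st) = length (po st)"
  by (induction st rule: rev_induct) (auto simp: Bs_snoc)

lemma Bs_snoc_nth: "i < length (po st) \<Longrightarrow> Bs (st @ ts) ! i = Bs st ! i"
proof (induction ts rule: rev_induct)
  case (snoc t ts)
  then show ?case using expand_nth[of i "Bs (st @ ts)" t]
    by (simp add: Bs_snoc flip: append_assoc)
qed simp

lemma Bs_ptr: "Bs (st @ [Ptr k]) = Bs st @ [Bs st ! k]"
  by (simp add: Bs_snoc)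

lemma Bs_node: "Bs (st @ [Node l r]) = Bs (st @ [l, r]) @ [Nd (Bs (st @ [l, r]) ! (length (po (st @ [l])) - 1)) (Bs (st @ [l, r]) ! (length (po (st @ [l, r])) - 1))]"
proof -
  have e1: "Bs (st @ [l]) = expand l (Bs st)" by (simp add: Bs_snoc)
  have e2: "Bs (st @ [l, r]) = expand r (Bs (st @ [l]))" using Bs_snoc[of "st @ [l]" r] by simp
  have ne1: "Bs (st @ [l]) \<noteq> []"
  proof -
    show ?thesis
    proof
      assume "Bs (st @ [l]) = []"
      then have "length (Bs (st @ [l])) = 0" by simp
      then show False using length_postorder_pos[of l] by simp
    qed
  qed
  have "last (Bs (st @ [l])) = Bs (st @ [l]) ! (length (Bs (st @ [l])) - 1)" using ne1 by (rule last_conv_nth)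
  then have "last (Bs (st @ [l])) = Bs (st @ [l]) ! (length (po (st @ [l])) - 1)" by simp
  also have "\<dots> = Bs (st @ [l, r]) ! (length (po (st @ [l])) - 1)"
    using Bs_snoc_nth[of "length (po (st @ [l])) - 1" "st @ [l]" "[r]"] length_postorder_pos[of l] by simp
  finally have L: "last (Bs (st @ [l])) = Bs (st @ [l, r]) ! (length (po (st @ [l])) - 1)" .
  have ne2: "Bs (st @ [l, r]) \<noteq> []"
  proof -
    show ?thesis
    proof
      assume "Bs (st @ [l, r]) = []"
      then have "length (Bs (st @ [l, r])) = 0" by simp
      then show False using length_postorder_pos[of r] by simp
    qed
  qed
  have "last (Bs (st @ [l, r])) = Bs (st @ [l, r]) ! (length (Bs (st @ [l, r])) - 1)" using ne2 by (rule last_conv_nth)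
  then have R: "last (Bs (st @ [l, r])) = Bs (st @ [l, r]) ! (length (po (st @ [l, r])) - 1)" by simp
  show ?thesis using L R e1 e2 by (simp add: Bs_snoc Let_def)
qed

lemma rts_snoc: "rts (st @ [t]) = rts st @ [length (po st) + length (postorder t) - 1]"
  unfolding rts_def by (auto simp: nth_append)

lemma length_rts[simp]: "length (rts st) = length st" by (simp add: rts_def)

lemma rts_single: "rts [LeftLeaf] = [0]" by (simp add: rts_def)

lemma lab_append: "k < length ps \<Longrightarrow> lab (ps @ qs) k = lab ps k"
  by (simp add: lab_def)

lemma lab_le: "lab ps k \<le> cntv ps"
  unfolding lab_def cntv_def
  by (metis append_take_drop_id filter_append le_add1 length_append)

lemma lab_pos: "k < length ps \<Longrightarrow> \<not> is_ptr (ps ! k) \<Longrightarrow> 1 \<le> lab ps k"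
  unfolding lab_def by (simp add: take_Suc_conv_app_nth)

lemma lab_strict: "j < k \<Longrightarrow> k < length ps \<Longrightarrow> \<not> is_ptr (ps ! k) \<Longrightarrow> lab ps j < lab ps k"
proof -
  assume a: "j < k" "k < length ps" "\<not> is_ptr (ps ! k)"
  have "lab ps j \<le> cntv (take k ps)"
    using lab_le[of "take k ps" j] a by (simp add: lab_def min_def)
  then show ?thesis using a unfolding lab_def by (simp add: take_Suc_conv_app_nth)
qed

lemma lab_inj: "j < length ps \<Longrightarrow> k < length ps \<Longrightarrow> \<not> is_ptr (ps ! j) \<Longrightarrow> \<not> is_ptr (ps ! k)
   \<Longrightarrow> lab ps j = lab ps k \<Longrightarrow> j = k"
  using lab_strict by (metis less_irrefl nat_neq_iff)

lemma lab_exists: "1 \<le> d \<Longrightarrow> d \<le> cntv ps \<Longrightarrow> \<exists>k<length ps. \<not> is_ptr (ps ! k) \<and> lab ps k = d"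
proof (induction ps rule: rev_induct)
  case Nil
  then show ?case by simp
next
  case (snoc p ps)
  show ?case
  proof (cases "d \<le> cntv ps")
    case True
    then obtain k where "k < length ps" "\<not> is_ptr (ps ! k)" "lab ps k = d" using snoc by blast
    then show ?thesis by (intro exI[of _ k]) (auto simp: nth_append lab_append)
  next
    case False
    then have "d = cntv ps + 1" "\<not> is_ptr p" using snoc.prems by (auto split: if_splits)
    then show ?thesis by (intro exI[of _ "length ps"]) (auto simp: lab_def)
  qed
qed

lemma ptrs_ok_prefix: "ptrs_ok (ps @ qs) \<Longrightarrow> ptrs_ok ps"
  unfolding ptrs_ok_def
proof (intro allI impI)
  fix i k
  assume a: "\<forall>i<length (ps @ qs). \<forall>k. (ps @ qs) ! i = Ptr k \<longrightarrow> k < i \<and> \<not> is_ptr ((ps @ qs) ! k)"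
    and i: "i < length ps" "ps ! i = Ptr k"
  have e: "(ps @ qs) ! i = Ptr k" using i by (simp add: nth_append)
  have "i < length (ps @ qs)" using i by simp
  then have ki: "k < i \<and> \<not> is_ptr ((ps @ qs) ! k)" using a e by blast
  then have "(ps @ qs) ! k = ps ! k" using i by (simp add: nth_append)
  then show "k < i \<and> \<not> is_ptr (ps ! k)" using ki by simp
qed

lemma ptrs_ok_snoc_nonptr: "ptrs_ok ps \<Longrightarrow> \<not> is_ptr p \<Longrightarrow> ptrs_ok (ps @ [p])"
  unfolding ptrs_ok_def by (auto simp: nth_append less_Suc_eq)

lemma ptrs_ok_snoc_ptr: "ptrs_ok ps \<Longrightarrow> k < length ps \<Longrightarrow> \<not> is_ptr (ps ! k) \<Longrightarrow> ptrs_ok (ps @ [Ptr k])"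
  unfolding ptrs_ok_def by (auto simp: nth_append less_Suc_eq)

lemma ptrs_ok_last: "ptrs_ok (ps @ [Ptr k]) \<Longrightarrow> k < length ps \<and> \<not> is_ptr (ps ! k)"
proof -
  assume "ptrs_ok (ps @ [Ptr k])"
  then have a: "\<forall>i<length (ps @ [Ptr k]). \<forall>k'. (ps @ [Ptr k]) ! i = Ptr k' \<longrightarrow> k' < i \<and> \<not> is_ptr ((ps @ [Ptr k]) ! k')"
    unfolding ptrs_ok_def by blast
  have "length ps < length (ps @ [Ptr k])" "(ps @ [Ptr k]) ! length ps = Ptr k" by simp_all
  then have ki: "k < length ps \<and> \<not> is_ptr ((ps @ [Ptr k]) ! k)" using a by blast
  then have "(ps @ [Ptr k]) ! k = ps ! k" by (simp add: nth_append)
  then show ?thesis using ki by simp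
qed

lemma rlab_snoc: "ptrs_ok ps \<Longrightarrow> i < length ps \<Longrightarrow> rlab (ps @ [p]) i = rlab ps i"
  unfolding rlab_def ptrs_ok_def
  by (cases "ps ! i") (auto simp: nth_append lab_append)

lemma rlab_le: "rlab ps i \<le> cntv ps"
  unfolding rlab_def by (cases "ps ! i") (auto simp: lab_le)

lemma rlab_pos: "ptrs_ok ps \<Longrightarrow> i < length ps \<Longrightarrow> 1 \<le> rlab ps i"
proof (cases "ps ! i")
  case (Ptr k)
  assume "ptrs_ok ps" "i < length ps"
  then have "k < i" "\<not> is_ptr (ps ! k)" using Ptr unfolding ptrs_ok_def by auto
  then have "1 \<le> lab ps k" using \<open>i < length ps\<close> by (intro lab_pos) auto
  then show ?thesis using Ptr by (simp add: rlab_def)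
next
  case LeftLeaf
  assume "ptrs_ok ps" "i < length ps"
  then show ?thesis using LeftLeaf lab_pos[of i ps] by (simp add: rlab_def)
next
  case (Node l r)
  assume "ptrs_ok ps" "i < length ps"
  then show ?thesis using Node lab_pos[of i ps] by (simp add: rlab_def)
qed

lemma toPath_length[simp]: "length (toPath ps) = length ps - 1"
  by (simp add: toPath_def)

lemma toPath_single[simp]: "toPath [p] = []"
  by (simp add: toPath_def)

lemma toPath_snoc: "ps \<noteq> [] \<Longrightarrow> toPath (ps @ [p]) = toPath ps @ [conv (ps @ [p]) (length ps)]"
proof -
  assume ne: "ps \<noteq> []"
  have u: "[1..<length (ps @ [p])] = [1..<length ps] @ [length ps]"
    using ne by (simp add: Suc_leI)
  have "map (\<lambda>i. conv (take (Suc i) (ps @ [p])) i) [1..<length ps] = map (\<lambda>i. conv (take (Suc i) ps) i) [1..<length ps]"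
    by (intro map_cong refl) auto
  then show ?thesis unfolding toPath_def u by simp
qed

lemma conv_ptr: "k < length ps \<Longrightarrow> conv (ps @ [Ptr k]) (length ps) = H (lab ps k)"
  by (simp add: conv_def lab_append)

lemma conv_nonptr: "\<not> is_ptr p \<Longrightarrow> conv (ps @ [p]) (length ps) = V"
  by (cases p) (auto simp: conv_def)

lemma take_upt1: "take m [Suc 0..<n] = [Suc 0..<min (Suc m) n]"
proof (cases "Suc m \<le> n")
  case True
  then show ?thesis by (simp add: take_upt min_def)
next
  case False
  then show ?thesis by (simp add: min_def)
qed

lemma toPath_take: "toPath (take (Suc m) ps) = take m (toPath ps)"
proof -
  have "take m (toPath ps) = map (\<lambda>i. conv (take (Suc i) ps) i) [Suc 0..<min (Suc m) (length ps)]"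
    unfolding toPath_def by (simp add: take_map take_upt1)
  also have "\<dots> = map (\<lambda>i. conv (take (Suc i) (take (Suc m) ps)) i) [Suc 0..<min (Suc m) (length ps)]"
  proof (intro map_cong refl)
    fix i assume "i \<in> set [Suc 0..<min (Suc m) (length ps)]"
    then have "Suc i \<le> Suc m" by simp
    then have "take (Suc i) (take (Suc m) ps) = take (Suc i) ps" by (simp add: min_def)
    then show "conv (take (Suc i) ps) i = conv (take (Suc i) (take (Suc m) ps)) i" by simp
  qed
  finally show ?thesis unfolding toPath_def by (simp add: min_def)
qed

lemma ycoord_toPath: "ps \<noteq> [] \<Longrightarrow> \<not> is_ptr (hd ps) \<Longrightarrow> ycoord (toPath ps) + 1 = cntv ps"
proof (induction ps rule: rev_induct)
  case Nil
  then show ?case by simp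
next
  case (snoc p ps)
  show ?case
  proof (cases "ps = []")
    case True
    then show ?thesis using snoc.prems by simp
  next
    case False
    have "ycoord (toPath ps) + 1 = cntv ps" using snoc False by simp
    moreover have "toPath (ps @ [p]) = toPath ps @ [conv (ps @ [p]) (length ps)]"
      using toPath_snoc False by blast
    moreover have "ycoord [conv (ps @ [p]) (length ps)] = (if is_ptr p then 0 else 1)"
      by (cases p) (auto simp: conv_def)
    ultimately show ?thesis by simp
  qed
qed

lemma toPath_nth: "j < length (toPath ps) \<Longrightarrow> toPath ps ! j = conv (take (Suc (Suc j)) ps) (Suc j)"
  by (simp add: toPath_def)

lemma step_label_toPath:
  assumes "ptrs_ok ps" "ps \<noteq> []" "\<not> is_ptr (hd ps)" "j < length (toPath ps)"
  shows "step_label (toPath ps) j = rlab ps (Suc j)"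
proof (cases "ps ! Suc j")
  case (Ptr k)
  have "k < Suc j" using assms(1,4) Ptr unfolding ptrs_ok_def by auto
  then have "lab (take (Suc (Suc j)) ps) k = lab ps k" by (simp add: lab_def min_def)
  moreover have "toPath ps ! j = H (lab (take (Suc (Suc j)) ps) k)"
    using toPath_nth[OF assms(4)] Ptr assms(4) by (simp add: conv_def)
  ultimately show ?thesis using Ptr by (simp add: step_label_def rlab_def)
next
  case LeftLeaf
  then have np: "\<not> is_ptr (ps ! Suc j)" by simp
  have "toPath ps ! j = V" using toPath_nth[OF assms(4)] np assms(4)
    by (cases "ps ! Suc j") (auto simp: conv_def)
  moreover have "ycoord (take (Suc j) (toPath ps)) + 1 = cntv (take (Suc (Suc j)) ps)"
    using ycoord_toPath[of "take (Suc (Suc j)) ps"] toPath_take[of "Suc j" ps] assms(2,3)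
    by (simp add: hd_take)
  moreover have "rlab ps (Suc j) = lab ps (Suc j)" using LeftLeaf by (simp add: rlab_def)
  ultimately show ?thesis by (simp add: step_label_def lab_def)
next
  case (Node l r)
  then have np: "\<not> is_ptr (ps ! Suc j)" by simp
  have "toPath ps ! j = V" using toPath_nth[OF assms(4)] np assms(4)
    by (cases "ps ! Suc j") (auto simp: conv_def)
  moreover have "ycoord (take (Suc j) (toPath ps)) + 1 = cntv (take (Suc (Suc j)) ps)"
    using ycoord_toPath[of "take (Suc (Suc j)) ps"] toPath_take[of "Suc j" ps] assms(2,3)
    by (simp add: hd_take)
  moreover have "rlab ps (Suc j) = lab ps (Suc j)" using Node by (simp add: rlab_def)
  ultimately show ?thesis by (simp add: step_label_def lab_def)
qed




lemma hd_po: "st \<noteq> [] \<Longrightarrow> leaves_ok (hd st) \<Longrightarrow> hd (po st) = LeftLeaf"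
proof -
  have "leaves_ok t \<Longrightarrow> hd (postorder t) = LeftLeaf" for t
    by (induction t) auto
  then show "st \<noteq> [] \<Longrightarrow> leaves_ok (hd st) \<Longrightarrow> hd (po st) = LeftLeaf"
    by (cases st) auto
qed

lemma wf_po_ne: "fwf st \<Longrightarrow> po st \<noteq> []"
  unfolding fwf_def by (cases st) auto

lemma wf_hd: "fwf st \<Longrightarrow> hd (po st) = LeftLeaf"
  unfolding fwf_def using hd_po by blast

lemma wf_nth0: "fwf st \<Longrightarrow> po st ! 0 = LeftLeaf"
  using wf_hd wf_po_ne by (metis hd_conv_nth)

lemma forest_cases:
  assumes "fwf st"
  shows "st = [LeftLeaf] \<or> (\<exists>s k. st = s @ [Ptr k] \<and> fwf s) \<or> (\<exists>s l r. st = s @ [Node l r] \<and> fwf (s @ [l, r]))"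
proof -
  have ne: "st \<noteq> []" using assms by (simp add: fwf_def)
  then obtain s t where st: "st = s @ [t]" by (metis rev_exhaust)
  have W: "leaves_ok (hd st)" "\<forall>t\<in>set (tl st). no_leftleaf t" "ptrs_ok (po st)" using assms by (auto simp: fwf_def)
  show ?thesis
  proof (cases t)
    case LeftLeaf
    have "s = []"
    proof (rule ccontr)
      assume "s \<noteq> []"
      then have "t \<in> set (tl st)" using st by (cases s) auto
      then show False using W(2) LeftLeaf by auto
    qed
    then show ?thesis using st LeftLeaf by simp
  next
    case (Ptr k)
    have sne: "s \<noteq> []" using st W(1) Ptr by (cases s) auto
    have "fwf s" unfolding fwf_def
    proof (intro conjI)
      show "s \<noteq> []" by (rule sne)
      show "leaves_ok (hd s)" using W(1) st sne by simp
      show "\<forall>t\<in>set (tl s). no_leftleaf t" using W(2) st sne by (cases s) auto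
      show "ptrs_ok (po s)" using W(3) st ptrs_ok_prefix by simp
    qed
    then show ?thesis using st Ptr by blast
  next
    case (Node l r)
    have "fwf (s @ [l, r])" unfolding fwf_def
    proof (intro conjI)
      show "s @ [l, r] \<noteq> []" by simp
      show "leaves_ok (hd (s @ [l, r]))" using W(1) st Node by (cases s) auto
      show "\<forall>t\<in>set (tl (s @ [l, r])). no_leftleaf t" using W(1,2) st Node by (cases s) auto
      show "ptrs_ok (po (s @ [l, r]))" using W(3) st Node ptrs_ok_prefix[of "po (s @ [l, r])" "[Node l r]"] by simp
    qed
    then show ?thesis using st Node by blast
  qed
qed

lemma forest_induct[consumes 1, case_names base ptr node]:
  assumes "fwf st"
    and base: "P [LeftLeaf]"
    and ptr: "\<And>s k. fwf (s @ [Ptr k]) \<Longrightarrow> fwf s \<Longrightarrow> P s \<Longrightarrow> P (s @ [Ptr k])"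
    and node: "\<And>s l r. fwf (s @ [Node l r]) \<Longrightarrow> fwf (s @ [l, r]) \<Longrightarrow> P (s @ [l, r]) \<Longrightarrow> P (s @ [Node l r])"
  shows "P st"
proof -
  have "\<And>st. length (po st) = n \<Longrightarrow> fwf st \<Longrightarrow> P st" for n
  proof (induction n rule: less_induct)
    case (less n)
    show ?case
      using forest_cases[OF less.prems(2)]
    proof (elim disjE exE conjE)
      assume "st = [LeftLeaf]" then show ?thesis using base by simp
    next
      fix s k assume st: "st = s @ [Ptr k]" and w: "fwf s"
      have "P s" using less.IH[of "length (po s)" s] less.prems st w by simp
      then show ?thesis using ptr w less.prems st by simp
    next
      fix s l r assume st: "st = s @ [Node l r]" and w: "fwf (s @ [l, r])"
      have "P (s @ [l, r])" using less.IH[of "length (po (s @ [l, r]))" "s @ [l, r]"] less.prems st w by simp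
      then show ?thesis using node w less.prems st by simp
    qed
  qed
  then show ?thesis using assms(1) by blast
qed

lemma toPath_ptr: "fwf (s @ [Ptr k]) \<Longrightarrow> fwf s \<Longrightarrow>
   toPath (po (s @ [Ptr k])) = toPath (po s) @ [H (lab (po s) k)] \<and> k < length (po s) \<and> \<not> is_ptr (po s ! k)"
proof -
  assume w: "fwf (s @ [Ptr k])" "fwf s"
  have k: "k < length (po s) \<and> \<not> is_ptr (po s ! k)"
    using w(1) ptrs_ok_last[of "po s" k] by (simp add: fwf_def)
  have "toPath (po s @ [Ptr k]) = toPath (po s) @ [conv (po s @ [Ptr k]) (length (po s))]"
    using toPath_snoc wf_po_ne[OF w(2)] by blast
  then show ?thesis using k conv_ptr by simp
qed

lemma toPath_node: "fwf (s @ [l, r]) \<Longrightarrow>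
   toPath (po (s @ [Node l r])) = toPath (po (s @ [l, r])) @ [V]"
proof -
  assume w: "fwf (s @ [l, r])"
  obtain ps where ps: "ps = po (s @ [l, r])" by simp
  have nep: "ps \<noteq> []" using wf_po_ne[OF w] ps by simp
  have "toPath (ps @ [Node l r]) = toPath ps @ [V]"
    using toPath_snoc[OF nep, of "Node l r"] conv_nonptr[of "Node l r" ps] by simp
  moreover have "po (s @ [Node l r]) = ps @ [Node l r]" using ps by simp
  ultimately show ?thesis using ps by simp
qed

lemma inv1:
  "fwf st \<Longrightarrow> hdec_path (toPath (po st)) \<and> xcoord (toPath (po st)) + 1 = ycoord (toPath (po st)) + length st
     \<and> cntv (po st) = ycoord (toPath (po st)) + 1"
proof (induction st rule: forest_induct)
  case base
  then show ?case by simp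
next
  case (ptr s k)
  have T: "toPath (po (s @ [Ptr k])) = toPath (po s) @ [H (lab (po s) k)]" "k < length (po s)" "\<not> is_ptr (po s ! k)"
    using toPath_ptr[OF ptr(1,2)] by auto
  have "1 \<le> lab (po s) k" using lab_pos T by blast
  moreover have "lab (po s) k \<le> ycoord (toPath (po s)) + 1" using lab_le ptr(3) by metis
  ultimately have "hdec_path (toPath (po (s @ [Ptr k])))" using ptr(3) T by (simp add: hdec_snoc hcond_def)
  then show ?case using ptr(3) T by simp
next
  case (node s l r)
  have T: "toPath (po (s @ [Node l r])) = toPath (po (s @ [l, r])) @ [V]" using toPath_node[OF node(2)] .
  have "hdec_path (toPath (po (s @ [Node l r])))" using node(3) T by (simp add: hdec_snoc hcond_def)
  then show ?case using node(3) T by simp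
qed

lemma inv_rts: "fwf st \<Longrightarrow> rts st = R (toPath (po st))"
proof (induction st rule: forest_induct)
  case base
  then show ?case by (simp add: rts_single)
next
  case (ptr s k)
  have T: "toPath (po (s @ [Ptr k])) = toPath (po s) @ [H (lab (po s) k)]"
    using toPath_ptr[OF ptr(1,2)] by auto
  have "length (po s) \<ge> 1" using wf_po_ne[OF ptr(2)] by (simp add: Suc_leI)
  then show ?case using T ptr(3) by (simp add: rts_snoc)
next
  case (node s l r)
  have T: "toPath (po (s @ [Node l r])) = toPath (po (s @ [l, r])) @ [V]" using toPath_node[OF node(2)] .
  have "rts (s @ [l, r]) = rts s @ [length (po s) + length (postorder l) - 1, length (po s) + length (postorder l) + length (postorder r) - 1]"
    using rts_snoc[of "s @ [l]" r] rts_snoc[of s l] by simp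
  moreover have "0 < length (postorder l)" "0 < length (postorder r)" by (simp_all add: length_postorder_pos)
  ultimately show ?case using T node(3) by (simp add: rts_snoc)
qed

lemma inv_Bs:
  "fwf st \<Longrightarrow> \<forall>i<length (po st). Bs st ! i = LB (toPath (po st)) ! (rlab (po st) i - 1)"
proof (induction st rule: forest_induct)
  case base
  then show ?case by (simp add: Bs_def rlab_def lab_def)
next
  case (ptr s k)
  have T: "toPath (po (s @ [Ptr k])) = toPath (po s) @ [H (lab (po s) k)]" "k < length (po s)" "\<not> is_ptr (po s ! k)"
    using toPath_ptr[OF ptr(1,2)] by auto
  have pk: "ptrs_ok (po s)" using ptr(2) by (simp add: fwf_def)
  show ?case
  proof (intro allI impI)
    fix i assume i: "i < length (po (s @ [Ptr k]))"
    show "Bs (s @ [Ptr k]) ! i = LB (toPath (po (s @ [Ptr k]))) ! (rlab (po (s @ [Ptr k])) i - 1)"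
    proof (cases "i < length (po s)")
      case True
      then show ?thesis using ptr(3) T(1) rlab_snoc[OF pk True, of "Ptr k"] by (simp add: Bs_ptr nth_append)
    next
      case False
      then have ii: "i = length (po s)" using i by simp
      have "rlab (po s @ [Ptr k]) i = lab (po s) k" using ii T(2) by (simp add: rlab_def lab_append)
      moreover have "rlab (po s) k = lab (po s) k" using T(3) by (cases "po s ! k") (auto simp: rlab_def)
      ultimately show ?thesis using ptr(3) T ii by (simp add: Bs_ptr nth_append)
    qed
  qed
next
  case (node s l r)
  let ?prev = "s @ [l, r]"
  obtain ps where ps: "ps = po ?prev" by simp
  let ?xs = "toPath ps"
  have T: "toPath (po (s @ [Node l r])) = ?xs @ [V]" using toPath_node[OF node(2)] ps by simp
  have pos: "po (s @ [Node l r]) = ps @ [Node l r]" using ps by simp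
  have pk: "ptrs_ok ps" using node(2) ps by (simp add: fwf_def)
  have I1: "hdec_path (?xs @ [V])" "cntv ps = ycoord ?xs + 1"
    using inv1[OF node(1)] inv1[OF node(2)] T ps by auto
  have hx: "hdec_path ?xs" using I1(1) hdec_prefix by blast
  have lenps: "length ps = length (po s) + length (postorder l) + length (postorder r)" using ps by simp
  have pl: "0 < length (postorder l)" and pr': "0 < length (postorder r)" by (rule length_postorder_pos)+
  have lps: "2 \<le> length ps" using lenps pl pr' by linarith
  have psne: "ps \<noteq> []" using lps by auto
  have p0: "ps ! 0 = LeftLeaf" using wf_nth0[OF node(2)] ps by simp
  have hd0: "\<not> is_ptr (hd ps)" using p0 psne by (simp add: hd_conv_nth)
  have lxs: "length ?xs = length ps - 1" by simp
  have xsne: "?xs \<noteq> []" using lxs lps by (metis One_nat_def Suc_1 diff_is_0_eq length_0_conv not_less_eq_eq)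
  define a where "a = length (po s) + length (postorder l) - 1"
  define b where "b = length ps - 1"
  have a_lt: "a < length ps" unfolding a_def using lenps pl pr' by linarith
  have b_lt: "b < length ps" unfolding b_def using lps by simp
  have Rx: "R ?xs = rts ?prev" using inv_rts[OF node(2)] ps by simp
  have rts_prev: "rts ?prev ! (length (rts ?prev) - 2) = a"
    unfolding a_def using rts_snoc[of "s @ [l]" r] rts_snoc[of s l] by (simp add: nth_append)
  have v1eq: "v1 (?xs @ [V]) (length ?xs) = rlab ps a"
  proof -
    have "v1 (?xs @ [V]) (length ?xs) = (if a = 0 then 1 else step_label ?xs (a - 1))"
      using v1_R[OF I1(1)] Rx rts_prev by (simp add: Let_def)
    also have "\<dots> = rlab ps a"
    proof (cases "a = 0")
      case True
      have "take (Suc 0) ps = [LeftLeaf]" using p0 psne take_Suc_conv_app_nth[of 0 ps] by simp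
      then show ?thesis using True p0 by (simp add: rlab_def lab_def)
    next
      case False
      have "a - 1 < length ?xs" using a_lt False lxs by simp
      then have "step_label ?xs (a - 1) = rlab ps (Suc (a - 1))"
        using step_label_toPath[OF pk psne hd0] by blast
      then show ?thesis using False by simp
    qed
    finally show ?thesis .
  qed
  have v2eq: "v2 (?xs @ [V]) (length ?xs) = rlab ps b"
  proof -
    have "v2 (?xs @ [V]) (length ?xs) = step_label ?xs (length ?xs - 1)" using v2_new[OF xsne] .
    also have "\<dots> = rlab ps (Suc (length ?xs - 1))"
    proof -
      have "length ?xs - 1 < length ?xs" using lps lxs by simp
      then show ?thesis using step_label_toPath[OF pk psne hd0] by blast
    qed
    also have "Suc (length ?xs - 1) = b" unfolding b_def using lps lxs by simp
    finally show ?thesis .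
  qed
  have IH: "\<And>i. i < length ps \<Longrightarrow> Bs ?prev ! i = LB ?xs ! (rlab ps i - 1)" using node(3) ps by simp
  have rb: "rlab ps i - 1 < length (LB ?xs)" if "i < length ps" for i
  proof -
    have "rlab ps i \<le> cntv ps" by (rule rlab_le)
    then show ?thesis using I1(2) by simp
  qed
  have Bn: "Bs (s @ [Node l r]) = Bs ?prev @ [Nd (Bs ?prev ! a) (Bs ?prev ! b)]"
    using Bs_node[of s l r] ps unfolding a_def b_def by simp
  have lBs: "length (Bs ?prev) = length ps" using ps by simp
  have T': "toPath (ps @ [Node l r]) = ?xs @ [V]"
    using toPath_snoc[OF psne, of "Node l r"] conv_nonptr[of "Node l r" ps] by simp
  show ?case unfolding pos
  proof (intro allI impI)
    fix i assume i: "i < length (ps @ [Node l r])"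
    show "Bs (s @ [Node l r]) ! i = LB (toPath (ps @ [Node l r])) ! (rlab (ps @ [Node l r]) i - 1)"
    proof (cases "i < length ps")
      case True
      have "rlab (ps @ [Node l r]) i = rlab ps i" using rlab_snoc[OF pk True] by simp
      moreover have "Bs (s @ [Node l r]) ! i = Bs ?prev ! i" using True Bn lBs by (simp add: nth_append)
      moreover have "LB (?xs @ [V]) ! (rlab ps i - 1) = LB ?xs ! (rlab ps i - 1)"
        using rb[OF True] by (simp add: nth_append)
      ultimately show ?thesis using IH[OF True] T' by simp
    next
      case False
      then have ii: "i = length ps" using i by simp
      have "rlab (ps @ [Node l r]) i = cntv ps + 1"
        using ii by (simp add: rlab_def lab_def)
      then have ri: "rlab (ps @ [Node l r]) i - 1 = length (LB ?xs)" using I1(2) by simp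
      have "Bs (s @ [Node l r]) ! i = Nd (Bs ?prev ! a) (Bs ?prev ! b)"
        using ii Bn lBs by (simp add: nth_append)
      also have "\<dots> = Nd (LB ?xs ! (rlab ps a - 1)) (LB ?xs ! (rlab ps b - 1))"
        using IH a_lt b_lt by simp
      finally show ?thesis using ri T' v1eq v2eq by (simp add: nth_append)
    qed
  qed
qed




lemma cntv_tree:
  "(leaves_ok t \<longrightarrow> cntv (postorder t) = rsize t + 1) \<and> (no_leftleaf t \<longrightarrow> cntv (postorder t) = rsize t)"
  by (induction t) auto

lemma wf_single: "fwf [t] \<longleftrightarrow> relaxed t"
  by (simp add: fwf_def relaxed_def pointers_ok_def ptrs_ok_def)

lemma Bof_eq: "Bof t = (!) (Bs [t])"
  by (rule ext) (simp add: Bof_def Bs_def)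

lemma vertices_eq: "vertices t = verts (po [t])"
  by (simp add: vertices_def verts_def)

lemma inj_iff:
  assumes w: "fwf st"
  shows "inj_on ((!) (Bs st)) (verts (po st)) \<longleftrightarrow> distinct (LB (toPath (po st)))"
proof -
  let ?ps = "po st"
  let ?xs = "toPath ?ps"
  let ?g = "\<lambda>i. lab ?ps i - 1"
  have I: "cntv ?ps = ycoord ?xs + 1" using inv1[OF w] by simp
  have pk: "ptrs_ok ?ps" using w by (simp add: fwf_def)
  have B: "\<And>i. i \<in> verts ?ps \<Longrightarrow> Bs st ! i = LB ?xs ! (?g i)"
  proof -
    fix i assume "i \<in> verts ?ps"
    then have i: "i < length ?ps" "\<not> is_ptr (?ps ! i)" by (auto simp: verts_def)
    then have "rlab ?ps i = lab ?ps i" by (cases "?ps ! i") (auto simp: rlab_def)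
    then show "Bs st ! i = LB ?xs ! (?g i)" using inv_Bs[OF w] i by simp
  qed
  have ginj: "inj_on ?g (verts ?ps)"
  proof (rule inj_onI)
    fix i j assume ij: "i \<in> verts ?ps" "j \<in> verts ?ps" "?g i = ?g j"
    have "1 \<le> lab ?ps i" "1 \<le> lab ?ps j" using ij(1,2) lab_pos by (auto simp: verts_def)
    then have "lab ?ps i = lab ?ps j" using ij(3) by simp
    then show "i = j" using ij(1,2) lab_inj by (auto simp: verts_def)
  qed
  have gim: "?g ` verts ?ps = {..<length (LB ?xs)}"
  proof
    show "?g ` verts ?ps \<subseteq> {..<length (LB ?xs)}"
    proof
      fix d assume "d \<in> ?g ` verts ?ps"
      then obtain i where i: "i \<in> verts ?ps" "d = ?g i" by blast
      have "1 \<le> lab ?ps i" using i lab_pos by (auto simp: verts_def)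
      moreover have "lab ?ps i \<le> cntv ?ps" by (rule lab_le)
      ultimately show "d \<in> {..<length (LB ?xs)}" using i I by simp
    qed
  next
    show "{..<length (LB ?xs)} \<subseteq> ?g ` verts ?ps"
    proof
      fix d assume "d \<in> {..<length (LB ?xs)}"
      then have "1 \<le> d + 1" "d + 1 \<le> cntv ?ps" using I by auto
      then obtain k where k: "k < length ?ps" "\<not> is_ptr (?ps ! k)" "lab ?ps k = d + 1"
        using lab_exists by blast
      then show "d \<in> ?g ` verts ?ps" by (intro image_eqI[of _ _ k]) (auto simp: verts_def)
    qed
  qed
  have "inj_on ((!) (Bs st)) (verts ?ps) \<longleftrightarrow> inj_on ((!) (LB ?xs) \<circ> ?g) (verts ?ps)"
    using B by (intro inj_on_cong) simp
  also have "\<dots> \<longleftrightarrow> inj_on ((!) (LB ?xs)) (?g ` verts ?ps)"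
    by (rule comp_inj_on_iff[OF ginj, symmetric])
  also have "\<dots> \<longleftrightarrow> inj_on ((!) (LB ?xs)) {..<length (LB ?xs)}" using gim by simp
  also have "\<dots> \<longleftrightarrow> distinct (LB ?xs)"
    unfolding distinct_conv_nth inj_on_def by auto
  finally show ?thesis .
qed

lemma uniq:
  "fwf st1 \<Longrightarrow> fwf st2 \<Longrightarrow> toPath (po st1) = toPath (po st2) \<Longrightarrow> st1 = st2"
proof (induction st1 arbitrary: st2 rule: forest_induct)
  case base
  show ?case using forest_cases[OF base(1)]
  proof (elim disjE exE conjE)
    fix s k assume st2: "st2 = s @ [Ptr k]" "fwf s"
    have "fwf (s @ [Ptr k])" using base(1) st2 by simp
    then have "toPath (po (s @ [Ptr k])) = toPath (po s) @ [H (lab (po s) k)]"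
      using toPath_ptr[of s k] st2(2) by blast
    then show ?thesis using base(2) st2(1) by simp
  next
    fix s l r assume st2: "st2 = s @ [Node l r]" "fwf (s @ [l, r])"
    have "toPath (po (s @ [Node l r])) = toPath (po (s @ [l, r])) @ [V]"
      using toPath_node[OF st2(2)] .
    then show ?thesis using base(2) st2(1) by simp
  qed simp
next
  case (ptr s k)
  have T1: "toPath (po (s @ [Ptr k])) = toPath (po s) @ [H (lab (po s) k)]" "k < length (po s)" "\<not> is_ptr (po s ! k)"
    using toPath_ptr[OF ptr(1,2)] by auto
  show ?case using forest_cases[OF ptr(4)]
  proof (elim disjE exE conjE)
    assume "st2 = [LeftLeaf]"
    then show ?thesis using ptr(5) T1 by simp
  next
    fix s2 k2 assume st2: "st2 = s2 @ [Ptr k2]" "fwf s2"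
    have w2: "fwf (s2 @ [Ptr k2])" using ptr(4) st2(1) by simp
    have T2: "toPath (po (s2 @ [Ptr k2])) = toPath (po s2) @ [H (lab (po s2) k2)]" "k2 < length (po s2)" "\<not> is_ptr (po s2 ! k2)"
      using toPath_ptr[OF w2 st2(2)] by auto
    have eq: "toPath (po s) @ [H (lab (po s) k)] = toPath (po s2) @ [H (lab (po s2) k2)]"
      using ptr(5) T1(1) T2(1) st2(1) by simp
    then have e1: "toPath (po s) = toPath (po s2)" and e2: "lab (po s) k = lab (po s2) k2" by simp_all
    have ss: "s = s2" using ptr(3)[OF st2(2) e1] .
    then have "lab (po s) k = lab (po s) k2" using e2 by simp
    then have "k = k2" using lab_inj[of k "po s" k2] T1(2,3) T2(2,3) ss by simp
    then show ?thesis using ss st2 by simp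
  next
    fix s2 l2 r2 assume st2: "st2 = s2 @ [Node l2 r2]" "fwf (s2 @ [l2, r2])"
    then show ?thesis using ptr(5) T1 toPath_node[of s2 l2 r2] by simp
  qed
next
  case (node s l r)
  have T1: "toPath (po (s @ [Node l r])) = toPath (po (s @ [l, r])) @ [V]" using toPath_node[OF node(2)] .
  show ?case using forest_cases[OF node(4)]
  proof (elim disjE exE conjE)
    assume "st2 = [LeftLeaf]"
    then show ?thesis using node(5) T1 by simp
  next
    fix s2 k2 assume st2: "st2 = s2 @ [Ptr k2]" "fwf s2"
    have "fwf (s2 @ [Ptr k2])" using node(4) st2 by simp
    then have "toPath (po (s2 @ [Ptr k2])) = toPath (po s2) @ [H (lab (po s2) k2)]"
      using toPath_ptr[of s2 k2] st2(2) by blast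
    then show ?thesis using node(5) T1 st2(1) by simp
  next
    fix s2 l2 r2 assume st2: "st2 = s2 @ [Node l2 r2]" "fwf (s2 @ [l2, r2])"
    then have "toPath (po (s @ [l, r])) = toPath (po (s2 @ [l2, r2]))"
      using node(5) T1 toPath_node[of s2 l2 r2] by simp
    then have "s @ [l, r] = s2 @ [l2, r2]" using node(3)[OF st2(2)] by blast
    then have "s = s2 \<and> l = l2 \<and> r = r2" by (rule two_snoc_inj)
    then show ?thesis using st2(1) by simp
  qed
qed

lemma wf_base: "fwf [LeftLeaf]"
  by (simp add: fwf_def ptrs_ok_def)

lemma existence: "hdec_path xs \<Longrightarrow> \<exists>st. fwf st \<and> toPath (po st) = xs"
proof (induction xs rule: rev_induct)
  case Nil
  then show ?case using wf_base by (intro exI[of _ "[LeftLeaf]"]) simp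
next
  case (snoc s xs)
  have h: "hdec_path xs" "hcond xs s" using snoc.prems by (auto simp: hdec_snoc)
  obtain st where st: "fwf st" "toPath (po st) = xs" using snoc.IH h by blast
  have I: "xcoord xs + 1 = ycoord xs + length st" "cntv (po st) = ycoord xs + 1" using inv1[OF st(1)] st(2) by auto
  have W: "st \<noteq> []" "leaves_ok (hd st)" "\<forall>t\<in>set (tl st). no_leftleaf t" "ptrs_ok (po st)"
    using st(1) by (auto simp: fwf_def)
  show ?case
  proof (cases s)
    case (H d)
    then have "1 \<le> d" "d \<le> cntv (po st)" using h(2) I by (auto simp: hcond_def)
    then obtain k where k: "k < length (po st)" "\<not> is_ptr (po st ! k)" "lab (po st) k = d"
      using lab_exists by blast
    have "fwf (st @ [Ptr k])" unfolding fwf_def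
    proof (intro conjI)
      show "st @ [Ptr k] \<noteq> []" by simp
      show "leaves_ok (hd (st @ [Ptr k]))" using W by simp
      show "\<forall>t\<in>set (tl (st @ [Ptr k])). no_leftleaf t" using W by (cases st) auto
      show "ptrs_ok (po (st @ [Ptr k]))" using ptrs_ok_snoc_ptr[OF W(4) k(1,2)] by simp
    qed
    moreover have "toPath (po (st @ [Ptr k])) = xs @ [s]"
    proof -
      have "po st \<noteq> []" using wf_po_ne[OF st(1)] .
      then have "toPath (po st @ [Ptr k]) = toPath (po st) @ [conv (po st @ [Ptr k]) (length (po st))]"
        by (rule toPath_snoc)
      then show ?thesis using conv_ptr[OF k(1)] k(3) st(2) H by simp
    qed
    ultimately show ?thesis by blast
  next
    case V
    then have "2 \<le> length st" using h(2) I by (simp add: hcond_def)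
    then have L2: "2 \<le> length st" .
    obtain st1 r where st1: "st = st1 @ [r]" using W(1) by (metis rev_exhaust)
    have "st1 \<noteq> []" using L2 st1 by auto
    then obtain s0 l where "st1 = s0 @ [l]" by (metis rev_exhaust)
    then have s0: "st = s0 @ [l, r]" using st1 by simp
    have "fwf (s0 @ [Node l r])" unfolding fwf_def
    proof (intro conjI)
      show "s0 @ [Node l r] \<noteq> []" by simp
      show "leaves_ok (hd (s0 @ [Node l r]))" using W s0 by (cases s0) auto
      show "\<forall>t\<in>set (tl (s0 @ [Node l r])). no_leftleaf t" using W s0 by (cases s0) auto
      have e: "po (s0 @ [Node l r]) = po st @ [Node l r]" using s0 by simp
      show "ptrs_ok (po (s0 @ [Node l r]))" unfolding e by (rule ptrs_ok_snoc_nonptr[OF W(4)]) simp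
    qed
    moreover have "toPath (po (s0 @ [Node l r])) = xs @ [s]"
      using toPath_node[of s0 l r] st s0 V by simp
    ultimately show ?thesis by blast
  qed
qed

lemma part2: "card {t. compacted t \<and> rsize t = n} = cnum n n"
proof -
  let ?A = "{t. compacted t \<and> rsize t = n}"
  let ?f = "\<lambda>t. toPath (postorder t)"
  have wA: "\<And>t. t \<in> ?A \<Longrightarrow> fwf [t]" by (simp add: compacted_def wf_single)
  have inj: "inj_on ?f ?A"
  proof (rule inj_onI)
    fix t1 t2 assume "t1 \<in> ?A" "t2 \<in> ?A" "?f t1 = ?f t2"
    then have "[t1] = [t2]" using uniq[of "[t1]" "[t2]"] wA by simp
    then show "t1 = t2" by simp
  qed
  have img: "?f ` ?A = Cset n n"
  proof
    show "?f ` ?A \<subseteq> Cset n n"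
    proof
      fix xs assume "xs \<in> ?f ` ?A"
      then obtain t where t: "t \<in> ?A" "xs = ?f t" by blast
      have w: "fwf [t]" using wA t by blast
      have I: "hdec_path xs" "xcoord xs + 1 = ycoord xs + 1" "cntv (postorder t) = ycoord xs + 1"
        using inv1[OF w] t by auto
      have "leaves_ok t" using w by (simp add: fwf_def)
      then have "cntv (postorder t) = rsize t + 1" using cntv_tree by blast
      then have y: "ycoord xs = n" using I t by simp
      have "inj_on (Bof t) (vertices t)" using t by (simp add: compacted_def)
      then have "distinct (LB xs)" using inj_iff[OF w] t by (simp add: Bof_eq vertices_eq)
      then have "C_decorated xs" using distinct_LB I(1) by blast
      then show "xs \<in> Cset n n" using y I by (simp add: Cset_def)
    qed
  next
    show "Cset n n \<subseteq> ?f ` ?A"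
    proof
      fix xs assume xs: "xs \<in> Cset n n"
      then have C: "C_decorated xs" and x: "xcoord xs = n" and y: "ycoord xs = n" by (auto simp: Cset_def)
      have h: "hdec_path xs" using C C_hdec by blast
      obtain st where st: "fwf st" "toPath (po st) = xs" using existence[OF h] by blast
      have "xcoord xs + 1 = ycoord xs + length st" using inv1[OF st(1)] st(2) by simp
      then have "length st = 1" using x y by simp
      then obtain t where t: "st = [t]" by (cases st) auto
      have rel: "relaxed t" using st(1) t wf_single by simp
      have "distinct (LB xs)" using distinct_LB[OF h] C by simp
      then have "inj_on (Bof t) (vertices t)" using inj_iff[OF st(1)] st(2) t by (simp add: Bof_eq vertices_eq)
      then have comp: "compacted t" using rel by (simp add: compacted_def)
      have "leaves_ok t" using st(1) t by (simp add: fwf_def)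
      then have "cntv (postorder t) = rsize t + 1" using cntv_tree by blast
      moreover have "cntv (postorder t) = ycoord xs + 1" using inv1[OF st(1)] st(2) t by simp
      ultimately have "rsize t = n" using y by simp
      then show "xs \<in> ?f ` ?A" using comp st(2) t by (intro image_eqI[of _ _ t]) auto
    qed
  qed
  have "card ?A = card (?f ` ?A)" using inj by (simp add: card_image)
  also have "\<dots> = cnum n n" using img by (simp add: cnum_Cset)
  finally show ?thesis .
qed

theorem proposition2p11:
  shows "(\<forall>n m. 1 \<le> m \<and> m \<le> n \<longrightarrow>
           int (cnum n m) = int (cnum n (m - 1)) + int (m + 1) * int (cnum (n - 1) m)
                            - int (m - 1) * int (cnum (n - 2) (m - 1)))
       \<and> (\<forall>n m. n < m \<longrightarrow> cnum n m = 0)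
       \<and> (\<forall>n. cnum n 0 = 1)
       \<and> (\<forall>n. card {t. compacted t \<and> rsize t = n} = cnum n n)"
  using part1 part2 by blast


end
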